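(* Consider the online algorithm selection procedure that maximizes $\mathrm{OneMax}$ on $\{0,1\}^n$ by starting from a uniformly random search point, running the $(1+\lambda)$ EA with population size $\lambda_1$ until it holds an individual at distance at most $D$ from the optimum $1^n$, and then switching to the $(1+(\lambda,\lambda))$ GA with population size $\lambda_2$ (initialized with that individual) until the optimum is found. Assume that, as functions of $n$: (a) $\lambda_1=O\left(\frac{\log\log n\,\log\log\log n}{\log\log\log\log n}\right)$; (b) $D\ge n/(\log n)^c$ for some constant $c>0$ and $D=O\left(\frac{n(\log\log n)^2}{\log n}\right)$; (c) $\lambda_2=\Omega\left(\frac{\log n}{\log\log n}\right)$ and $\lambda_2=O\left(\frac{n}{D}\log\log n\right)$. Then the expected number of fitness evaluations until the optimum is found is $O(n\log\log n)$.
   Context: $\mathrm{OneMax}(x)=\sum_{i=1}^n x_i$, optimum $1^n$; distance = number of zero-bits. The $(1+\lambda)$ EA keeps one individual $x$; each iteration creates $\lambda$ offspring independently by flipping each bit of $x$ independently with probability $1/n$, picks a best offspring $y$ (ties arbitrary), and sets $x\gets y$ if $f(y)\ge f(x)$; cost $\lambda$ evaluations per iteration. The $(1+(\lambda,\lambda))$ GA with parameter $\lambda\in[1..n]$ keeps one individual $x$; each iteration: sample $\ell\sim\mathrm{Bin}(n,\lambda/n)$, create $\lambda$ offspring each flipping exactly $\ell$ uniformly random distinct positions of $x$, let $x'$ be a best one (ties uniformly at random); then create $\lambda$ offspring each taking independently per position the bit of $x'$ with probability $1/\lambda$ and of $x$ otherwise; let $y$ be a best one; set $x\gets y$ if $f(y)\ge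 f(x)$. Cost $2\lambda$ evaluations per iteration. *)

theory Defs
  imports "HOL-Probability.Probability" "HOL-Library.Landau_Symbols"
begin

definition onemax :: "bool list \<Rightarrow> nat" where
  "onemax x = length (filter id x)"

fun bitwise_mut :: "real \<Rightarrow> bool list \<Rightarrow> bool list pmf" where
  "bitwise_mut p [] = return_pmf []"
| "bitwise_mut p (b # bs) =
     bind_pmf (bernoulli_pmf p) (\<lambda>c. bind_pmf (bitwise_mut p bs)
       (\<lambda>cs. return_pmf ((if c then \<not> b else b) # cs)))"

fun sample_list :: "nat \<Rightarrow> 'a pmf \<Rightarrow> 'a list pmf" where
  "sample_list 0 M = return_pmf []"
| "sample_list (Suc k) M =
     bind_pmf M (\<lambda>y. bind_pmf (sample_list k M) (\<lambda>ys. return_pmf (y # ys)))"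

definition best_idx :: "bool list list \<Rightarrow> nat set" where
  "best_idx ys = {i. i < length ys \<and> (\<forall>j<length ys. onemax (ys ! j) \<le> onemax (ys ! i))}"

text \<open>Fixed (arbitrary) tie-breaking: first best offspring.\<close>
definition best_first :: "bool list list \<Rightarrow> bool list" where
  "best_first ys = ys ! (LEAST i. i \<in> best_idx ys)"

definition best_uniform :: "bool list list \<Rightarrow> bool list pmf" where
  "best_uniform ys = map_pmf (\<lambda>i. ys ! i) (pmf_of_set (best_idx ys))"

definition ea_step :: "nat \<Rightarrow> nat \<Rightarrow> bool list \<Rightarrow> bool list pmf" where
  "ea_step n lam x =
     bind_pmf (sample_list lam (bitwise_mut (1 / real n) x))
       (\<lambda>ys. let y = best_first ys in return_pmf (if onemax x \<le> onemax y then y else x))"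

definition flip_set :: "nat set \<Rightarrow> bool list \<Rightarrow> bool list" where
  "flip_set S x = map (\<lambda>i. if i \<in> S then \<not> x ! i else x ! i) [0..<length x]"

definition mut_ell :: "nat \<Rightarrow> bool list \<Rightarrow> bool list pmf" where
  "mut_ell l x = map_pmf (\<lambda>S. flip_set S x)
     (pmf_of_set {S. S \<subseteq> {..<length x} \<and> card S = l})"

fun crossover :: "real \<Rightarrow> bool list \<Rightarrow> bool list \<Rightarrow> bool list pmf" where
  "crossover p [] ys = return_pmf []"
| "crossover p (a # as) [] = return_pmf []"
| "crossover p (a # as) (b # bs) =
     bind_pmf (bernoulli_pmf p) (\<lambda>c. bind_pmf (crossover p as bs)
       (\<lambda>cs. return_pmf ((if c then b else a) # cs)))"

definition ga_step :: "nat \<Rightarrow> nat \<Rightarrow> bool list \<Rightarrow> bool list pmf" where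
  "ga_step n lam x =
     bind_pmf (binomial_pmf n (real lam / real n)) (\<lambda>l.
     bind_pmf (sample_list lam (mut_ell l x)) (\<lambda>ys.
     bind_pmf (best_uniform ys) (\<lambda>x'.
     bind_pmf (sample_list lam (crossover (1 / real lam) x x')) (\<lambda>zs.
       let y = best_first zs in return_pmf (if onemax x \<le> onemax y then y else x)))))"

text \<open>State: (switched to GA?, current individual).\<close>
definition combined_step ::
  "nat \<Rightarrow> nat \<Rightarrow> nat \<Rightarrow> nat \<Rightarrow> bool \<times> bool list \<Rightarrow> (bool \<times> bool list) pmf" where
  "combined_step n lam1 D lam2 s =
     (if fst s then map_pmf (\<lambda>y. (True, y)) (ga_step n lam2 (snd s))
      else map_pmf (\<lambda>y. (n - onemax y \<le> D, y)) (ea_step n lam1 (snd s)))"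

definition init_state :: "nat \<Rightarrow> nat \<Rightarrow> (bool \<times> bool list) pmf" where
  "init_state n D = map_pmf (\<lambda>x. (n - onemax x \<le> D, x)) (pmf_of_set {x. length x = n})"

definition state_after :: "nat \<Rightarrow> nat \<Rightarrow> nat \<Rightarrow> nat \<Rightarrow> nat \<Rightarrow> (bool \<times> bool list) pmf" where
  "state_after n lam1 D lam2 t =
     ((\<lambda>M. bind_pmf M (combined_step n lam1 D lam2)) ^^ t) (init_state n D)"

definition iter_cost :: "nat \<Rightarrow> nat \<Rightarrow> nat \<Rightarrow> bool \<times> bool list \<Rightarrow> nat" where
  "iter_cost n lam1 lam2 s =
     (if snd s = replicate n True then 0 else if fst s then 2 * lam2 else lam1)"

text \<open>Expected number of fitness evaluations (1 for the initial point).\<close>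
definition expected_evals :: "nat \<Rightarrow> nat \<Rightarrow> nat \<Rightarrow> nat \<Rightarrow> ennreal" where
  "expected_evals n lam1 D lam2 =
     1 + (\<Sum>t. \<integral>\<^sup>+ s. ennreal (real (iter_cost n lam1 lam2 s))
                   \<partial>measure_pmf (state_after n lam1 D lam2 t))"

end

theory Submission
  imports Defs "HOL-Real_Asymp.Real_Asymp"
begin

lemma sample_list_eq: "sample_list k M = replicate_pmf k M"
  by (induction k) auto

lemma prob_bind:
  "measure_pmf.prob (bind_pmf M f) X = measure_pmf.expectation M (\<lambda>x. measure_pmf.prob (f x) X)"
proof -
  have int: "integrable (measure_pmf M) (\<lambda>x. measure_pmf.prob (f x) X)"
    by (rule measure_pmf.integrable_const_bound[where B=1]) auto
  have "emeasure (measure_pmf (bind_pmf M f)) X = (\<integral>\<^sup>+x. ennreal (measure_pmf.prob (f x) X) \<partial>M)"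
    by (subst emeasure_bind_pmf) (simp add: measure_pmf.emeasure_eq_measure)
  also have "\<dots> = ennreal (measure_pmf.expectation M (\<lambda>x. measure_pmf.prob (f x) X))"
    by (rule nn_integral_eq_integral[OF int]) auto
  finally show ?thesis
    by (simp add: measure_pmf.emeasure_eq_measure)
qed

lemma prob_bind_ge:
  assumes "\<And>x. x \<in> set_pmf M \<Longrightarrow> Q x \<Longrightarrow> c \<le> measure_pmf.prob (f x) X" "0 \<le> c"
  shows "c * measure_pmf.prob M {x. Q x} \<le> measure_pmf.prob (bind_pmf M f) X"
proof -
  have "c * measure_pmf.prob M {x. Q x} = measure_pmf.expectation M (\<lambda>x. c * indicator {x. Q x} x)"
    by simp
  also have "\<dots> \<le> measure_pmf.expectation M (\<lambda>x. measure_pmf.prob (f x) X)"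
    apply (rule integral_mono_AE)
      apply (rule measure_pmf.integrable_const_bound[where B="\<bar>c\<bar>"], auto simp: indicator_def)[1]
     apply (rule measure_pmf.integrable_const_bound[where B=1], auto)[1]
    using assms by (auto simp: AE_measure_pmf_iff indicator_def)
  finally show ?thesis by (simp add: prob_bind)
qed

lemma prob_replicate_all:
  "measure_pmf.prob (replicate_pmf k M) {ys. \<forall>y\<in>set ys. P y} = measure_pmf.prob M {y. P y} ^ k"
proof (induction k)
  case 0
  then show ?case by (simp add: measure_pmf_single)
next
  case (Suc k)
  have "measure_pmf.prob (replicate_pmf (Suc k) M) {ys. \<forall>y\<in>set ys. P y}
      = measure_pmf.expectation M (\<lambda>y. indicator {y. P y} y * measure_pmf.prob M {y. P y} ^ k)"
  proof -
    have eq: "measure_pmf.prob (replicate_pmf k M) {y. P x \<and> (\<forall>x\<in>set y. P x)}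
       = indicator {y. P y} x * measure_pmf.prob M {y. P y} ^ k" for x
      using Suc by (auto simp: indicator_def)
    show ?thesis by (simp add: prob_bind map_pmf_def[symmetric] eq)
  qed
  also have "\<dots> = measure_pmf.prob M {y. P y} ^ Suc k" by simp
  finally show ?case .
qed

lemma prob_replicate_ex:
  "measure_pmf.prob (replicate_pmf k M) {ys. \<exists>y\<in>set ys. P y} = 1 - (1 - measure_pmf.prob M {y. P y}) ^ k"
proof -
  have "measure_pmf.prob (replicate_pmf k M) {ys. \<exists>y\<in>set ys. P y}
      = 1 - measure_pmf.prob (replicate_pmf k M) {ys. \<forall>y\<in>set ys. \<not> P y}"
    by (subst measure_pmf.prob_compl[symmetric]) (auto intro!: arg_cong[where f="measure_pmf.prob _"])
  moreover have "measure_pmf.prob M {y. \<not> P y} = 1 - measure_pmf.prob M {y. P y}"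
    by (subst measure_pmf.prob_compl[symmetric]) (auto intro!: arg_cong[where f="measure_pmf.prob _"])
  ultimately show ?thesis by (simp add: prob_replicate_all)
qed

lemma card_Suc_split:
  fixes X :: "nat set"
  assumes "finite X"
  shows "card X = card {i. Suc i \<in> X} + (if 0 \<in> X then 1 else 0)"
proof -
  have fin: "finite {i. Suc i \<in> X}"
    using finite_vimageI[OF assms, of Suc] by (simp add: vimage_def)
  have eq: "X = Suc ` {i. Suc i \<in> X} \<union> (X \<inter> {0})"
  proof (rule set_eqI)
    fix x show "x \<in> X \<longleftrightarrow> x \<in> Suc ` {i. Suc i \<in> X} \<union> (X \<inter> {0})"
      by (cases x) auto
  qed
  have "card X = card (Suc ` {i. Suc i \<in> X}) + card (X \<inter> {0})"
    by (subst eq, rule card_Un_disjoint) (use fin in auto)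
  also have "card (Suc ` {i. Suc i \<in> X}) = card {i. Suc i \<in> X}"
    by (rule card_image) auto
  finally show ?thesis by (auto simp: Int_insert_right)
qed

lemma expectation_bernoulli:
  assumes "0 \<le> p" "p \<le> 1"
  shows "measure_pmf.expectation (bernoulli_pmf p) (g :: bool \<Rightarrow> real) = p * g True + (1 - p) * g False"
  using assms by (subst integral_measure_pmf[where A=UNIV]) (auto simp: UNIV_bool)

lemma mask_prob:
  assumes "0 \<le> p" "p \<le> 1"
  shows "S \<subseteq> {..<n} \<Longrightarrow> A \<subseteq> S \<Longrightarrow>
    measure_pmf.prob (replicate_pmf n (bernoulli_pmf p)) {m. \<forall>i\<in>S. m!i = (i\<in>A)}
      = p ^ card A * (1-p) ^ card (S - A)"
proof (induction n arbitrary: S A)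
  case 0
  then show ?case by simp
next
  case (Suc n)
  define S' where "S' = {i. Suc i \<in> S}"
  define A' where "A' = {i. Suc i \<in> A}"
  have S'sub: "S' \<subseteq> {..<n}" "A' \<subseteq> S'" using Suc.prems by (auto simp: S'_def A'_def)
  have finS: "finite S" using Suc.prems finite_subset by blast
  have finA: "finite A" using Suc.prems finS finite_subset by blast
  have IH: "measure_pmf.prob (replicate_pmf n (bernoulli_pmf p)) {m. \<forall>i\<in>S'. m!i = (i\<in>A')}
      = p ^ card A' * (1-p) ^ card (S' - A')" by (rule Suc.IH[OF S'sub])
  have ev: "{m. \<forall>i\<in>S. (c # m)!i = (i\<in>A)} =
      (if 0 \<in> S \<and> c \<noteq> (0 \<in> A) then {} else {m. \<forall>i\<in>S'. m!i = (i\<in>A')})" for c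
  proof -
    have "(\<forall>i\<in>S. (c # m)!i = (i\<in>A)) \<longleftrightarrow> (0 \<in> S \<longrightarrow> c = (0 \<in> A)) \<and> (\<forall>i\<in>S'. m!i = (i\<in>A'))" for m
    proof
      assume H: "\<forall>i\<in>S. (c # m)!i = (i\<in>A)"
      have 1: "0 \<in> S \<longrightarrow> c = (0 \<in> A)" using H by force
      have 2: "m!i = (i\<in>A')" if "i \<in> S'" for i
        using H that unfolding S'_def A'_def by force
      show "(0 \<in> S \<longrightarrow> c = (0 \<in> A)) \<and> (\<forall>i\<in>S'. m!i = (i\<in>A'))" using 1 2 by blast
    next
      assume H: "(0 \<in> S \<longrightarrow> c = (0 \<in> A)) \<and> (\<forall>i\<in>S'. m!i = (i\<in>A'))"
      show "\<forall>i\<in>S. (c # m)!i = (i\<in>A)"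
      proof
        fix i assume "i \<in> S"
        then show "(c # m)!i = (i\<in>A)" using H by (cases i) (auto simp: S'_def A'_def)
      qed
    qed
    then show ?thesis by auto
  qed
  have cA: "card A = card A' + (if 0 \<in> A then 1 else 0)"
    unfolding A'_def by (rule card_Suc_split[OF finA])
  have cSA: "card (S - A) = card (S' - A') + (if 0 \<in> S - A then 1 else 0)"
    using card_Suc_split[of "S - A"] finS by (simp add: S'_def A'_def set_diff_eq)
  have "measure_pmf.prob (replicate_pmf (Suc n) (bernoulli_pmf p)) {m. \<forall>i\<in>S. m!i = (i\<in>A)}
     = measure_pmf.expectation (bernoulli_pmf p) (\<lambda>c.
         if 0 \<in> S \<and> c \<noteq> (0 \<in> A) then 0 else p ^ card A' * (1-p) ^ card (S' - A'))"
  proof -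
    have e2: "measure_pmf.prob (replicate_pmf n (bernoulli_pmf p)) (if b then {} else {m. \<forall>i\<in>S'. m!i = (i\<in>A')})
      = (if b then 0 else p ^ card A' * (1-p) ^ card (S' - A'))" for b
      using IH by simp
    show ?thesis by (simp add: prob_bind map_pmf_def[symmetric] ev e2 del: measure_empty)
  qed
  also have "\<dots> = p ^ card A * (1-p) ^ card (S - A)"
    using Suc.prems assms by (subst expectation_bernoulli) (auto simp: cA cSA algebra_simps)
  finally show ?case .
qed

definition ones :: "bool list \<Rightarrow> nat set" where "ones x = {i. i < length x \<and> x!i}"
definition zeros :: "bool list \<Rightarrow> nat set" where "zeros x = {i. i < length x \<and> \<not> x!i}"

lemma onemax_card: "onemax x = card (ones x)"
  by (simp add: onemax_def ones_def length_filter_conv_card)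

lemma ones_zeros: "card (ones x) + card (zeros x) = length x"
proof -
  have "card (ones x \<union> zeros x) = card (ones x) + card (zeros x)"
    by (rule card_Un_disjoint) (auto simp: ones_def zeros_def)
  moreover have "ones x \<union> zeros x = {..<length x}" by (auto simp: ones_def zeros_def)
  ultimately show ?thesis by simp
qed

lemma card_zeros: "card (zeros x) = length x - onemax x"
  using ones_zeros[of x] by (simp add: onemax_card)

lemma onemax_le: "onemax x \<le> length x"
  by (simp add: onemax_def)

lemma length_flip_set[simp]: "length (flip_set S x) = length x"
  by (simp add: flip_set_def)

lemma nth_flip_set[simp]: "i < length x \<Longrightarrow> flip_set S x ! i = (if i \<in> S then \<not> x!i else x!i)"
  by (simp add: flip_set_def)

lemma ones_flip_set: "S \<subseteq> {..<length x} \<Longrightarrow> ones (flip_set S x) = (ones x - S) \<union> (S \<inter> zeros x)"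
  by (auto simp: ones_def zeros_def)

lemma onemax_flip_set:
  assumes "S \<subseteq> {..<length x}"
  shows "onemax (flip_set S x) + card (S \<inter> ones x) = onemax x + card (S \<inter> zeros x)"
proof -
  have fin: "finite (ones x)" "finite (zeros x)" by (auto simp: ones_def zeros_def)
  have "onemax (flip_set S x) = card (ones x - S) + card (S \<inter> zeros x)"
    unfolding onemax_card ones_flip_set[OF assms]
    by (rule card_Un_disjoint) (use fin in \<open>auto simp: ones_def zeros_def\<close>)
  moreover have "card (ones x) = card (ones x - S) + card (S \<inter> ones x)"
  proof -
    have "ones x = (ones x - S) \<union> (S \<inter> ones x)" by auto
    then have "card (ones x) = card ((ones x - S) \<union> (S \<inter> ones x))" by simp
    also have "\<dots> = card (ones x - S) + card (S \<inter> ones x)"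
      by (rule card_Un_disjoint) (use fin in auto)
    finally show ?thesis .
  qed
  ultimately show ?thesis by (simp add: onemax_card)
qed

lemma flip_set_zeros:
  assumes "S \<subseteq> zeros x"
  shows "onemax (flip_set S x) = onemax x + card S"
proof -
  have "S \<subseteq> {..<length x}" using assms by (auto simp: zeros_def)
  moreover have "S \<inter> ones x = {}" using assms by (auto simp: ones_def zeros_def)
  moreover have "S \<inter> zeros x = S" using assms by auto
  ultimately show ?thesis using onemax_flip_set[of S x] by simp
qed

lemma map_upt_Cons: "map f [0..<Suc k] = f 0 # map (\<lambda>i. f (Suc i)) [0..<k]"
  by (induction k) auto

lemma flip_set_Cons:
  "flip_set S (b # bs) = (if 0 \<in> S then \<not> b else b) # flip_set {i. Suc i \<in> S} bs"
  unfolding flip_set_def by (simp add: map_upt_Cons del: upt_Suc)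

lemma bitwise_mut_mask:
  "bitwise_mut p x = map_pmf (\<lambda>m. flip_set {i. i < length x \<and> m!i} x)
      (replicate_pmf (length x) (bernoulli_pmf p))"
proof (induction x)
  case Nil
  then show ?case by (simp add: flip_set_def)
next
  case (Cons b bs)
  show ?case
    by (simp add: Cons map_bind_pmf bind_map_pmf flip_set_Cons)
qed

lemma crossover_mask:
  "length y = length x \<Longrightarrow> crossover p x y = map_pmf (\<lambda>m. map (\<lambda>i. if m!i then y!i else x!i) [0..<length x])
      (replicate_pmf (length x) (bernoulli_pmf p))"
proof (induction x arbitrary: y)
  case Nil
  then show ?case by simp
next
  case (Cons a as)
  then obtain b bs where y: "y = b # bs" and l: "length bs = length as" by (cases y) auto
  show ?case
    unfolding y by (simp add: Cons.IH[OF l] map_bind_pmf bind_map_pmf map_upt_Cons del: upt_Suc) (simp add: nth_Cons_0 if_bool_eq_conj)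
qed

lemma xover_flip:
  assumes "length x' = length x"
  shows "map (\<lambda>i. if m!i then x'!i else x!i) [0..<length x]
       = flip_set ({i. i < length x \<and> x'!i \<noteq> x!i} \<inter> {i. m!i}) x"
  by (rule nth_equalityI) (use assms in auto)

lemma best_exists:
  assumes "ys \<noteq> []"
  shows "\<exists>i<length ys. \<forall>j<length ys. onemax (ys!j) \<le> onemax (ys!i)"
proof -
  have "Max (onemax ` set ys) \<in> onemax ` set ys" using assms by (intro Max_in) auto
  then obtain y where y: "y \<in> set ys" "onemax y = Max (onemax ` set ys)" by auto
  then obtain i where i: "i < length ys" "ys!i = y" by (auto simp: in_set_conv_nth)
  have "onemax (ys!j) \<le> onemax (ys!i)" if "j < length ys" for j
    using that i y by (simp add: Max_ge)
  then show ?thesis using i by blast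
qed

lemma best_first:
  assumes "ys \<noteq> []"
  shows "best_first ys \<in> set ys" "\<And>y. y \<in> set ys \<Longrightarrow> onemax y \<le> onemax (best_first ys)"
proof -
  obtain i where "i \<in> best_idx ys" using best_exists[OF assms] by (auto simp: best_idx_def)
  then have L: "(LEAST i. i \<in> best_idx ys) \<in> best_idx ys" by (rule LeastI)
  show "best_first ys \<in> set ys" using L by (simp add: best_first_def best_idx_def)
  fix y assume "y \<in> set ys"
  then obtain j where "j < length ys" "ys!j = y" by (auto simp: in_set_conv_nth)
  then show "onemax y \<le> onemax (best_first ys)" using L by (auto simp: best_first_def best_idx_def)
qed

lemma best_uniform:
  assumes "ys \<noteq> []" "x' \<in> set_pmf (best_uniform ys)"
  shows "x' \<in> set ys" "\<And>y. y \<in> set ys \<Longrightarrow> onemax y \<le> onemax x'"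
proof -
  have ne: "best_idx ys \<noteq> {}" using best_exists[OF assms(1)] by (auto simp: best_idx_def)
  have fin: "finite (best_idx ys)" by (auto simp: best_idx_def)
  obtain i where i: "i \<in> best_idx ys" "x' = ys!i"
    using assms(2) ne fin by (auto simp: best_uniform_def)
  show "x' \<in> set ys" using i by (auto simp: best_idx_def)
  fix y assume "y \<in> set ys"
  then obtain j where "j < length ys" "ys!j = y" by (auto simp: in_set_conv_nth)
  then show "onemax y \<le> onemax x'" using i by (auto simp: best_idx_def)
qed

lemma pow_le_inv:
  fixes q :: real
  assumes "0 \<le> q" "q \<le> 1"
  shows "(1 - q) ^ m \<le> 1 / (1 + m * q)"
proof -
  have b: "1 + m * q \<le> (1 + q) ^ m" using Bernoulli_inequality[of q m] assms by simp
  have pos: "0 < 1 + m * q" using assms by (simp add: add_pos_nonneg)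
  have "(1 - q) ^ m * (1 + q) ^ m = (1 - q^2) ^ m" by (simp add: power_mult_distrib[symmetric] power2_eq_square algebra_simps)
  also have "\<dots> \<le> 1" using assms by (intro power_le_one) (auto simp: power2_eq_square mult_le_one)
  finally have "(1 - q) ^ m * (1 + q) ^ m \<le> 1" .
  then have "(1 - q) ^ m * (1 + m * q) \<le> 1"
    using b assms by (smt (verit) mult_left_mono zero_le_power)
  then show ?thesis using pos by (simp add: field_simps)
qed

lemma one_minus_pow_ge:
  fixes q :: real
  assumes "0 \<le> q" "q \<le> 1"
  shows "m * q / (1 + m * q) \<le> 1 - (1 - q) ^ m"
proof -
  have pos: "0 < 1 + m * q" using assms by (simp add: add_pos_nonneg)
  have "m * q / (1 + m * q) = 1 - 1 / (1 + m * q)" using pos by (simp add: field_simps)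
  then show ?thesis using pow_le_inv[OF assms, of m] by simp
qed

lemma frac_mono:
  fixes a b :: real
  assumes "0 \<le> a" "a \<le> b"
  shows "a / (1 + a) \<le> b / (1 + b)"
  using assms by (simp add: field_simps)

lemma pow_one_minus_inv_ge:
  assumes "2 \<le> m"
  shows "exp (-2) \<le> (1 - 1 / real m) ^ m"
proof -
  define y where "y = 1 / (real m - 1)"
  have y0: "0 < y" using assms by (simp add: y_def)
  have "(1 + y) ^ m \<le> exp y ^ m"
    by (rule power_mono) (use y0 in auto)
  also have "\<dots> = exp (m * y)" by (simp add: exp_of_nat_mult)
  also have "m * y \<le> 2" using assms by (simp add: y_def field_simps)
  then have "exp (m * y) \<le> exp 2" by simp
  finally have A: "(1 + y) ^ m \<le> exp 2" .
  have "(1 - 1 / real m) * (1 + y) = 1" using assms by (simp add: y_def field_simps)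
  then have "(1 - 1 / real m) ^ m * (1 + y) ^ m = 1" by (metis power_mult_distrib power_one)
  then have "(1 - 1 / real m) ^ m = 1 / (1 + y) ^ m"
    using y0 by (simp add: field_simps)
  also have "\<dots> \<ge> 1 / exp 2" using A y0 by (intro divide_left_mono) auto
  finally show ?thesis by (simp add: exp_minus field_simps)
qed

lemma set_bitwise_mut:
  "y \<in> set_pmf (bitwise_mut p x) \<Longrightarrow> length y = length x"
  by (auto simp: bitwise_mut_mask)

lemma prob_mut_gain:
  fixes x :: "bool list" and n k :: nat
  assumes n: "length x = n" "n \<ge> 1" and k: "k \<le> card (zeros x)"
  shows "real (card (zeros x) choose k) * (1 / real n) ^ k * (1 - 1 / real n) ^ (n - k)
      \<le> measure_pmf.prob (bitwise_mut (1 / real n) x) {z. onemax x + k \<le> onemax z}"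
proof -
  let ?p = "1 / real n"
  let ?R = "replicate_pmf n (bernoulli_pmf ?p)"
  define F where "F = {A. A \<subseteq> zeros x \<and> card A = k}"
  define E where "E = (\<lambda>A. {m::bool list. \<forall>i\<in>{..<n}. m!i = (i\<in>A)})"
  have p01: "0 \<le> ?p" "?p \<le> 1" using n by auto
  have finz: "finite (zeros x)" by (simp add: zeros_def)
  have finF: "finite F" unfolding F_def using finz by (simp add: finite_subset)
  have cardF: "card F = card (zeros x) choose k" unfolding F_def by (rule n_subsets[OF finz])
  have zsub: "zeros x \<subseteq> {..<n}" using n by (auto simp: zeros_def)
  have EA: "measure_pmf.prob ?R (E A) = ?p ^ k * (1 - ?p) ^ (n - k)" if "A \<in> F" for A
  proof -
    have A: "A \<subseteq> {..<n}" "card A = k" "finite A" using that zsub finz unfolding F_def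
      by (auto intro: finite_subset)
    have "card ({..<n} - A) = n - k" using A by (simp add: card_Diff_subset)
    then show ?thesis unfolding E_def using mask_prob[OF p01, of "{..<n}" n A] A by simp
  qed
  have disj: "disjoint_family_on E F"
    unfolding disjoint_family_on_def
  proof (intro ballI impI)
    fix A B assume "A \<in> F" "B \<in> F" "A \<noteq> B"
    then obtain i where i: "i \<in> A \<longleftrightarrow> i \<notin> B" "i < n" using zsub unfolding F_def by blast
    then show "E A \<inter> E B = {}" unfolding E_def by auto
  qed
  have "measure_pmf.prob ?R (\<Union>A\<in>F. E A) = (\<Sum>A\<in>F. measure_pmf.prob ?R (E A))"
    by (rule measure_pmf.finite_measure_finite_Union[OF finF _ disj]) auto
  also have "\<dots> = real (card (zeros x) choose k) * ?p ^ k * (1 - ?p) ^ (n - k)"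
    using EA cardF by simp
  finally have U: "measure_pmf.prob ?R (\<Union>A\<in>F. E A) = real (card (zeros x) choose k) * ?p ^ k * (1 - ?p) ^ (n - k)" .
  have sub: "(\<Union>A\<in>F. E A) \<subseteq> (\<lambda>m. flip_set {i. i < length x \<and> m!i} x) -` {z. onemax x + k \<le> onemax z}"
  proof
    fix m assume "m \<in> (\<Union>A\<in>F. E A)"
    then obtain A where A: "A \<in> F" "m \<in> E A" by blast
    have "{i. i < length x \<and> m!i} = A" using A zsub n unfolding E_def F_def by auto
    moreover have "onemax (flip_set A x) = onemax x + k"
      using A flip_set_zeros[of A x] unfolding F_def by auto
    ultimately show "m \<in> (\<lambda>m. flip_set {i. i < length x \<and> m!i} x) -` {z. onemax x + k \<le> onemax z}"
      by simp
  qed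
  have M: "bitwise_mut ?p x = map_pmf (\<lambda>m. flip_set {i. i < length x \<and> m!i} x) ?R"
    using bitwise_mut_mask[of ?p x] n(1) by simp
  have "measure_pmf.prob ?R (\<Union>A\<in>F. E A) \<le> measure_pmf.prob ?R ((\<lambda>m. flip_set {i. i < length x \<and> m!i} x) -` {z. onemax x + k \<le> onemax z})"
    by (rule measure_pmf.finite_measure_mono[OF sub]) simp
  also have "\<dots> = measure_pmf.prob (bitwise_mut ?p x) {z. onemax x + k \<le> onemax z}"
    unfolding M by simp
  finally show ?thesis using U by simp
qed

lemma ea_step_support:
  assumes "lam \<ge> 1" "y \<in> set_pmf (ea_step n lam x)"
  shows "length y = length x \<and> onemax x \<le> onemax y"
proof -
  obtain ys where ys: "ys \<in> set_pmf (replicate_pmf lam (bitwise_mut (1 / real n) x))"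
    and y: "y = (if onemax x \<le> onemax (best_first ys) then best_first ys else x)"
    using assms(2) by (auto simp: ea_step_def sample_list_eq Let_def)
  have "ys \<noteq> []" "\<forall>z\<in>set ys. length z = length x"
    using ys assms(1) by (auto simp: set_replicate_pmf set_bitwise_mut)
  then show ?thesis using y best_first[of ys] by auto
qed

lemma ea_step_gain:
  assumes "lam \<ge> 1" "q \<le> measure_pmf.prob (bitwise_mut (1 / real n) x) {z. onemax x + k \<le> onemax z}"
    "0 \<le> q"
  shows "1 - (1 - q) ^ lam \<le> measure_pmf.prob (ea_step n lam x) {y. onemax x + k \<le> onemax y}"
proof -
  let ?M = "bitwise_mut (1 / real n) x"
  let ?Q = "measure_pmf.prob ?M {z. onemax x + k \<le> onemax z}"
  have "ea_step n lam x = map_pmf (\<lambda>ys. if onemax x \<le> onemax (best_first ys) then best_first ys else x)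
      (replicate_pmf lam ?M)"
    by (simp add: ea_step_def sample_list_eq map_pmf_def Let_def)
  then have "measure_pmf.prob (ea_step n lam x) {y. onemax x + k \<le> onemax y}
     = measure_pmf.prob (replicate_pmf lam ?M) ((\<lambda>ys. if onemax x \<le> onemax (best_first ys) then best_first ys else x) -` {y. onemax x + k \<le> onemax y})"
    by simp
  also have "\<dots> \<ge> measure_pmf.prob (replicate_pmf lam ?M) {ys. \<exists>z\<in>set ys. onemax x + k \<le> onemax z}"
  proof (rule measure_pmf.finite_measure_mono)
    show "{ys. \<exists>z\<in>set ys. onemax x + k \<le> onemax z} \<subseteq> (\<lambda>ys. if onemax x \<le> onemax (best_first ys) then best_first ys else x) -` {y. onemax x + k \<le> onemax y}"
    proof
      fix ys assume "ys \<in> {ys. \<exists>z\<in>set ys. onemax x + k \<le> onemax z}"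
      then obtain z where z: "z \<in> set ys" "onemax x + k \<le> onemax z" by auto
      then have "ys \<noteq> []" by auto
      then have "onemax z \<le> onemax (best_first ys)" using best_first z by blast
      then show "ys \<in> (\<lambda>ys. if onemax x \<le> onemax (best_first ys) then best_first ys else x) -` {y. onemax x + k \<le> onemax y}"
        using z by auto
    qed
  qed auto
  finally have A: "1 - (1 - ?Q) ^ lam \<le> measure_pmf.prob (ea_step n lam x) {y. onemax x + k \<le> onemax y}"
    by (simp add: prob_replicate_ex)
  have "(1 - ?Q) ^ lam \<le> (1 - q) ^ lam"
    using assms by (intro power_mono) auto
  then show ?thesis using A by linarith
qed

lemma expectation_bind_fin:
  fixes g :: "'b \<Rightarrow> real"
  assumes "finite (set_pmf M)" "\<And>x. x \<in> set_pmf M \<Longrightarrow> finite (set_pmf (f x))"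
  shows "measure_pmf.expectation (bind_pmf M f) g = measure_pmf.expectation M (\<lambda>x. measure_pmf.expectation (f x) g)"
proof -
  have "measure_pmf.expectation (bind_pmf M f) g = (\<Sum>a\<in>set_pmf M. pmf M a *\<^sub>R measure_pmf.expectation (f a) g)"
    by (rule pmf_expectation_bind[OF assms(1) assms(2) subset_refl])
  also have "\<dots> = measure_pmf.expectation M (\<lambda>x. measure_pmf.expectation (f x) g)"
    by (subst integral_measure_pmf[of "set_pmf M"]) (auto simp: assms)
  finally show ?thesis .
qed

lemma binom_moments:
  assumes p: "0 \<le> p" "p \<le> 1"
  shows "measure_pmf.expectation (binomial_pmf n p) (\<lambda>k. real k) = n * p
    \<and> measure_pmf.expectation (binomial_pmf n p) (\<lambda>k. real k ^ 2) = n * p * (1 - p) + (n * p) ^ 2"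
proof (induction n)
  case 0
  then show ?case using p by (simp add: binomial_pmf_0)
next
  case (Suc n)
  let ?B = "binomial_pmf n p"
  have pp: "p \<in> {0..1}" using p by auto
  have fin: "finite (set_pmf ?B)" using pp by auto
  have E: "measure_pmf.expectation (binomial_pmf (Suc n) p) g =
      measure_pmf.expectation (bernoulli_pmf p) (\<lambda>b. measure_pmf.expectation ?B (\<lambda>k. g ((if b then 1 else 0) + k)))"
    for g :: "nat \<Rightarrow> real"
    unfolding binomial_pmf_Suc[OF pp]
    by (subst expectation_bind_fin) (auto simp: fin expectation_bind_fin)
  have I1: "measure_pmf.expectation ?B (\<lambda>k. real ((if b then 1 else 0) + k)) = (if b then 1 else 0) + n * p" for b
    using Suc.IH pp by (simp add: Bochner_Integration.integral_add)
  have I2: "measure_pmf.expectation ?B (\<lambda>k. real ((if b then 1 else 0) + k) ^ 2)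
     = (if b then 1 else 0) + 2 * (if b then 1 else 0) * (n * p) + (n * p * (1 - p) + (n * p) ^ 2)" for b
  proof -
    have "(\<lambda>k. real ((if b then 1 else 0) + k) ^ 2) = (\<lambda>k. (if b then 1 else 0) + (2 * (if b then 1 else 0) * real k + real k ^ 2))"
      by (auto simp: power2_eq_square algebra_simps)
    then show ?thesis using Suc.IH pp
      by (simp add: Bochner_Integration.integral_add)
  qed
  show ?case
    using p Suc.IH by (simp add: E I1 I2 expectation_bernoulli algebra_simps power2_eq_square)
qed

lemma binom_conc:
  assumes lam: "8 \<le> lam" "lam \<le> n"
  shows "1 / 2 \<le> measure_pmf.prob (binomial_pmf n (real lam / real n)) {l. real lam / 2 \<le> real l \<and> l \<le> 2 * lam}"
proof -
  let ?p = "real lam / real n"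
  let ?B = "binomial_pmf n ?p"
  have n0: "n > 0" using lam by auto
  have p: "0 \<le> ?p" "?p \<le> 1" using lam by auto
  have np: "real n * ?p = lam" using n0 by simp
  have pp: "?p \<in> {0..1}" using p by auto
  have mom: "measure_pmf.expectation ?B (\<lambda>k. real k) = lam"
     "measure_pmf.expectation ?B (\<lambda>k. real k ^ 2) = lam * (1 - ?p) + lam ^ 2"
    using binom_moments[OF p, of n] np by auto
  have var: "measure_pmf.variance ?B (\<lambda>k. real k) = lam * (1 - ?p)"
  proof -
    have "(\<lambda>k. (real k - real lam) ^ 2) = (\<lambda>k. real k ^ 2 + (- (2 * real lam * real k) + real lam ^ 2))"
      by (auto simp: power2_eq_square algebra_simps)
    then have "measure_pmf.expectation ?B (\<lambda>k. (real k - real lam) ^ 2) = lam * (1 - ?p)"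
      using mom pp by (simp add: Bochner_Integration.integral_add power2_eq_square)
    then show ?thesis using mom by simp
  qed
  have cheb: "measure_pmf.prob ?B {x \<in> space (measure_pmf ?B). real lam / 2 \<le> \<bar>real x - measure_pmf.expectation ?B (\<lambda>k. real k)\<bar>}
       \<le> measure_pmf.variance ?B (\<lambda>k. real k) / (real lam / 2)\<^sup>2"
    using lam pp by (intro measure_pmf.Chebyshev_inequality) auto
  have hv: "measure_pmf.variance ?B (\<lambda>k. real k) / (real lam / 2)\<^sup>2 \<le> 1 / 2"
  proof -
    have "measure_pmf.variance ?B (\<lambda>k. real k) \<le> lam" using var p by (simp add: mult_left_le)
    moreover have "real lam \<le> (real lam / 2)\<^sup>2 / 2" using lam by (simp add: power2_eq_square field_simps)
    ultimately show ?thesis using lam by (simp add: field_simps)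
  qed
  have set_eq: "{x \<in> space (measure_pmf ?B). real lam / 2 \<le> \<bar>real x - measure_pmf.expectation ?B (\<lambda>k. real k)\<bar>}
      = {x. real lam / 2 \<le> \<bar>real x - real lam\<bar>}" using mom(1) by auto
  have bad: "measure_pmf.prob ?B {x. real lam / 2 \<le> \<bar>real x - real lam\<bar>} \<le> 1 / 2"
    using cheb hv unfolding set_eq by linarith
  have "{x. \<not> (real lam / 2 \<le> \<bar>real x - real lam\<bar>)} \<subseteq> {l. real lam / 2 \<le> real l \<and> l \<le> 2 * lam}"
  proof
    fix x assume "x \<in> {x. \<not> (real lam / 2 \<le> \<bar>real x - real lam\<bar>)}"
    then have h: "real lam / 2 \<le> real x" "real x \<le> real (2 * lam)" by (auto simp: abs_if split: if_splits)
    then have "x \<le> 2 * lam" by (simp only: of_nat_le_iff)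
    then show "x \<in> {l. real lam / 2 \<le> real l \<and> l \<le> 2 * lam}" using h by simp
  qed
  then have "measure_pmf.prob ?B {x. \<not> (real lam / 2 \<le> \<bar>real x - real lam\<bar>)} \<le> measure_pmf.prob ?B {l. real lam / 2 \<le> real l \<and> l \<le> 2 * lam}"
    by (rule measure_pmf.finite_measure_mono) auto
  moreover have "measure_pmf.prob ?B {x. \<not> (real lam / 2 \<le> \<bar>real x - real lam\<bar>)} = 1 - measure_pmf.prob ?B {x. real lam / 2 \<le> \<bar>real x - real lam\<bar>}"
    by (subst measure_pmf.prob_compl[symmetric]) (auto intro!: arg_cong[where f="measure_pmf.prob _"])
  ultimately show ?thesis using bad by linarith
qed

lemma cross_single:
  assumes lam: "2 \<le> lam" and len: "length x' = length x"
    and S: "S = {i. i < length x \<and> x'!i \<noteq> x!i}" "card S \<le> 2 * lam"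
    and i: "i \<in> S" "\<not> x!i"
  shows "exp (-4) / real lam \<le> measure_pmf.prob (crossover (1 / real lam) x x') {z. onemax x < onemax z}"
proof -
  let ?p = "1 / real lam"
  let ?R = "replicate_pmf (length x) (bernoulli_pmf ?p)"
  let ?g = "\<lambda>m. map (\<lambda>j. if m!j then x'!j else x!j) [0..<length x]"
  have p01: "0 \<le> ?p" "?p \<le> 1" using lam by auto
  have Ssub: "S \<subseteq> {..<length x}" using S by auto
  have finS: "finite S" using Ssub finite_subset by blast
  have il: "i < length x" using i S by auto
  have E: "measure_pmf.prob ?R {m. \<forall>j\<in>S. m!j = (j \<in> {i})} = ?p ^ 1 * (1-?p) ^ card (S - {i})"
    using mask_prob[OF p01, of S "length x" "{i}"] Ssub i by simp
  have cS: "card (S - {i}) \<le> 2 * lam" using S(2) finS i by (simp add: card_Diff_singleton)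
  have "(1 - ?p) ^ (2 * lam) \<le> (1 - ?p) ^ card (S - {i})"
    by (rule power_decreasing[OF cS]) (use p01 in auto)
  moreover have "(1 - ?p) ^ (2 * lam) = ((1 - ?p) ^ lam) ^ 2"
    by (metis power_mult mult.commute)
  moreover have "exp (-2) ^ 2 \<le> ((1 - ?p) ^ lam) ^ 2"
    using pow_one_minus_inv_ge[OF lam] by (intro power_mono) auto
  moreover have "exp (-2) ^ 2 = exp (-4::real)"
    by (simp add: power2_eq_square exp_add[symmetric])
  ultimately have pow: "exp (-4) \<le> (1 - ?p) ^ card (S - {i})" by linarith
  have sub: "{m. \<forall>j\<in>S. m!j = (j \<in> {i})} \<subseteq> ?g -` {z. onemax x < onemax z}"
  proof
    fix m assume m: "m \<in> {m. \<forall>j\<in>S. m!j = (j \<in> {i})}"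
    have "S \<inter> {j. m!j} = {i}" using m i by auto
    then have "?g m = flip_set {i} x" using xover_flip[OF len, of m] S(1) by simp
    moreover have "onemax (flip_set {i} x) = onemax x + 1"
      using flip_set_zeros[of "{i}" x] il i by (simp add: zeros_def)
    ultimately show "m \<in> ?g -` {z. onemax x < onemax z}" by simp
  qed
  have "?p * exp (-4) \<le> measure_pmf.prob ?R {m. \<forall>j\<in>S. m!j = (j \<in> {i})}"
    using E pow p01 lam by (simp add: divide_right_mono)
  also have "\<dots> \<le> measure_pmf.prob ?R (?g -` {z. onemax x < onemax z})"
    by (rule measure_pmf.finite_measure_mono[OF sub]) simp
  also have "\<dots> = measure_pmf.prob (crossover ?p x x') {z. onemax x < onemax z}"
    by (simp add: crossover_mask[OF len])
  finally show ?thesis by simp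
qed

definition cX :: real where "cX = exp (-4) / (1 + exp (-4))"

lemma cX_pos: "0 < cX" "cX \<le> 1"
  unfolding cX_def using exp_gt_zero[of "-4"] by (auto simp: field_simps simp del: exp_gt_zero)

lemma cross_phase:
  assumes lam: "2 \<le> lam" and len: "length x' = length x"
    and S: "S = {i. i < length x \<and> x'!i \<noteq> x!i}" "card S \<le> 2 * lam"
    and i: "i \<in> S" "\<not> x!i"
  shows "cX \<le> measure_pmf.prob (bind_pmf (replicate_pmf lam (crossover (1 / real lam) x x'))
     (\<lambda>zs. let y = best_first zs in return_pmf (if onemax x \<le> onemax y then y else x))) {y. onemax x < onemax y}"
proof -
  let ?C = "crossover (1 / real lam) x x'"
  let ?Q = "measure_pmf.prob ?C {z. onemax x < onemax z}"
  let ?g = "\<lambda>zs. if onemax x \<le> onemax (best_first zs) then best_first zs else x"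
  have Q: "exp (-4) / real lam \<le> ?Q" by (rule cross_single[OF assms])
  have eq: "bind_pmf (replicate_pmf lam ?C)
     (\<lambda>zs. let y = best_first zs in return_pmf (if onemax x \<le> onemax y then y else x)) = map_pmf ?g (replicate_pmf lam ?C)"
    by (simp add: map_pmf_def Let_def)
  have "measure_pmf.prob (replicate_pmf lam ?C) {zs. \<exists>z\<in>set zs. onemax x < onemax z}
      \<le> measure_pmf.prob (replicate_pmf lam ?C) (?g -` {y. onemax x < onemax y})"
  proof (rule measure_pmf.finite_measure_mono)
    show "{zs. \<exists>z\<in>set zs. onemax x < onemax z} \<subseteq> ?g -` {y. onemax x < onemax y}"
    proof
      fix zs assume "zs \<in> {zs. \<exists>z\<in>set zs. onemax x < onemax z}"
      then obtain z where z: "z \<in> set zs" "onemax x < onemax z" by auto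
      then have "zs \<noteq> []" by auto
      then have "onemax z \<le> onemax (best_first zs)" using best_first z by blast
      then show "zs \<in> ?g -` {y. onemax x < onemax y}" using z by auto
    qed
  qed auto
  then have A: "1 - (1 - ?Q) ^ lam \<le> measure_pmf.prob (map_pmf ?g (replicate_pmf lam ?C)) {y. onemax x < onemax y}"
    by (simp add: prob_replicate_ex)
  have Q01: "0 \<le> ?Q" "?Q \<le> 1" by auto
  have "real lam * ?Q / (1 + real lam * ?Q) \<le> 1 - (1 - ?Q) ^ lam"
    by (rule one_minus_pow_ge[OF Q01])
  moreover have "exp (-4) / (1 + exp (-4)) \<le> real lam * ?Q / (1 + real lam * ?Q)"
  proof (rule frac_mono)
    show "exp (-4) \<le> real lam * ?Q" using Q lam by (simp add: field_simps)
  qed simp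
  ultimately show ?thesis using A eq by (simp add: cX_def)
qed

lemma choose_Suc_mult: "Suc k * (m choose Suc k) = (m - k) * (m choose k)"
proof (cases m)
  case 0
  then show ?thesis by simp
next
  case (Suc m')
  then show ?thesis using Suc_times_binomial[of k m'] binomial_absorb_comp[of "Suc m'" k] by simp
qed

lemma choose_ratio:
  assumes "d \<le> n"
  shows "l \<le> n \<Longrightarrow> real ((n - d) choose l) \<le> (1 - real d / real n) ^ l * real (n choose l)"
proof (induction l)
  case 0
  then show ?case by simp
next
  case (Suc l)
  have n1: "1 \<le> n" using Suc.prems by simp
  have IH: "real ((n - d) choose l) \<le> (1 - real d / real n) ^ l * real (n choose l)"
    using Suc by simp
  have q0: "0 \<le> 1 - real d / real n" using assms n1 by simp
  have a: "real (Suc l) * real ((n - d) choose Suc l) = real (n - d - l) * real ((n - d) choose l)"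
    using choose_Suc_mult[of l "n - d"] by (metis of_nat_mult)
  have b: "real (Suc l) * real (n choose Suc l) = real (n - l) * real (n choose l)"
    using choose_Suc_mult[of l n] by (metis of_nat_mult)
  have key: "real (n - d - l) \<le> (1 - real d / real n) * real (n - l)"
  proof (cases "d + l \<le> n")
    case True
    then have "real (n - d - l) = real n - d - l" "real (n - l) = real n - l" by auto
    moreover have "(real n - d - l) * n \<le> (real n - d) * (real n - l)"
      by (simp add: algebra_simps)
    ultimately show ?thesis using n1 by (simp add: field_simps)
  next
    case False
    then have "real (n - d - l) = 0" by simp
    then show ?thesis using q0 by simp
  qed
  have "real (Suc l) * real ((n - d) choose Suc l) \<le> (1 - real d / real n) * real (n - l) * ((1 - real d / real n) ^ l * real (n choose l))"
    unfolding a by (rule mult_mono[OF key IH]) (use q0 in auto)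
  also have "\<dots> = (1 - real d / real n) ^ Suc l * (real (n - l) * real (n choose l))"
    by (simp add: algebra_simps)
  also have "\<dots> = real (Suc l) * ((1 - real d / real n) ^ Suc l * real (n choose Suc l))"
    unfolding b[symmetric] by (simp only: mult_ac)
  finally have "real (Suc l) * real ((n - d) choose Suc l) \<le> real (Suc l) * ((1 - real d / real n) ^ Suc l * real (n choose Suc l))" .
  then show ?case by (rule mult_left_le_imp_le) simp
qed

definition subsU :: "nat \<Rightarrow> nat \<Rightarrow> nat set set" where
  "subsU n l = {S. S \<subseteq> {..<n} \<and> card S = l}"

lemma subsU_fin: "finite (subsU n l)"
  unfolding subsU_def by (rule finite_subset[of _ "Pow {..<n}"]) auto

lemma subsU_ne: "l \<le> n \<Longrightarrow> subsU n l \<noteq> {}"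
proof -
  assume "l \<le> n"
  then have "{..<l} \<in> subsU n l" by (auto simp: subsU_def)
  then show ?thesis by blast
qed

lemma mut_ell_set:
  "l \<le> length x \<Longrightarrow> set_pmf (mut_ell l x) = (\<lambda>S. flip_set S x) ` subsU (length x) l"
  unfolding mut_ell_def subsU_def[symmetric] using subsU_fin subsU_ne by simp

lemma diff_flip: "S \<subseteq> {..<length x} \<Longrightarrow> {i. i < length x \<and> flip_set S x ! i \<noteq> x!i} = S"
  by (auto split: if_splits)

lemma card_split_oz:
  assumes "S \<subseteq> {..<length x}"
  shows "card (S \<inter> ones x) + card (S \<inter> zeros x) = card S"
proof -
  have fin: "finite S" using assms finite_subset by blast
  have "S = (S \<inter> ones x) \<union> (S \<inter> zeros x)" using assms by (auto simp: ones_def zeros_def)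
  then have "card S = card ((S \<inter> ones x) \<union> (S \<inter> zeros x))" by simp
  also have "\<dots> = card (S \<inter> ones x) + card (S \<inter> zeros x)"
    by (rule card_Un_disjoint) (use fin in \<open>auto simp: ones_def zeros_def\<close>)
  finally show ?thesis by simp
qed

lemma flip_good_iff:
  assumes "S \<subseteq> {..<length x}" "card S = l"
  shows "onemax x + 2 \<le> onemax (flip_set S x) + l \<longleftrightarrow> S \<inter> zeros x \<noteq> {}"
proof -
  have A: "onemax (flip_set S x) + card (S \<inter> ones x) = onemax x + card (S \<inter> zeros x)"
    by (rule onemax_flip_set[OF assms(1)])
  have B: "card (S \<inter> ones x) + card (S \<inter> zeros x) = l" using card_split_oz[OF assms(1)] assms(2) by simp
  have fin: "finite (S \<inter> zeros x)" by (simp add: zeros_def)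
  show ?thesis
  proof
    assume H: "onemax x + 2 \<le> onemax (flip_set S x) + l"
    show "S \<inter> zeros x \<noteq> {}"
    proof
      assume "S \<inter> zeros x = {}"
      then show False using A B H by simp
    qed
  next
    assume "S \<inter> zeros x \<noteq> {}"
    then have "card (S \<inter> zeros x) \<ge> 1" using fin by (simp add: Suc_le_eq card_gt_0_iff)
    then show "onemax x + 2 \<le> onemax (flip_set S x) + l" using A B by linarith
  qed
qed

lemma mut_not_good:
  assumes len: "length x = n" and l: "l \<le> n"
  shows "measure_pmf.prob (mut_ell l x) {z. \<not> (onemax x + 2 \<le> onemax z + l)}
     \<le> (1 - real (card (zeros x)) / real n) ^ l"
proof -
  let ?U = "subsU n l"
  let ?d = "card (zeros x)"
  have zs: "zeros x \<subseteq> {..<n}" using len by (auto simp: zeros_def)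
  have dn: "?d \<le> n" using card_mono[OF _ zs] by simp
  have M: "mut_ell l x = map_pmf (\<lambda>S. flip_set S x) (pmf_of_set ?U)"
    by (simp add: mut_ell_def subsU_def len)
  have "measure_pmf.prob (mut_ell l x) {z. \<not> (onemax x + 2 \<le> onemax z + l)}
      = measure_pmf.prob (pmf_of_set ?U) ((\<lambda>S. flip_set S x) -` {z. \<not> (onemax x + 2 \<le> onemax z + l)})"
    unfolding M by simp
  also have "\<dots> \<le> measure_pmf.prob (pmf_of_set ?U) {S. S \<inter> zeros x = {}}"
  proof (rule measure_pmf.finite_measure_mono_AE)
    show "AE S in measure_pmf (pmf_of_set ?U). S \<in> (\<lambda>S. flip_set S x) -` {z. \<not> (onemax x + 2 \<le> onemax z + l)} \<longrightarrow> S \<in> {S. S \<inter> zeros x = {}}"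
      using subsU_fin subsU_ne[OF l] flip_good_iff len
      by (auto simp: AE_measure_pmf_iff subsU_def)
  qed simp
  also have "\<dots> = card (?U \<inter> {S. S \<inter> zeros x = {}}) / card ?U"
    using subsU_fin subsU_ne[OF l] by (simp add: measure_pmf_of_set)
  also have "?U \<inter> {S. S \<inter> zeros x = {}} = {S. S \<subseteq> {..<n} - zeros x \<and> card S = l}"
    by (auto simp: subsU_def)
  also have "card \<dots> = (n - ?d) choose l"
    using n_subsets[of "{..<n} - zeros x" l] zs by (simp add: card_Diff_subset finite_subset)
  also have "card ?U = n choose l" unfolding subsU_def using n_subsets[of "{..<n}" l] by simp
  also have "real ((n - ?d) choose l) / real (n choose l) \<le> (1 - real ?d / real n) ^ l"
  proof -
    have pos: "0 < real (n choose l)" using l by simp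
    show ?thesis using choose_ratio[OF dn l] pos by (simp add: field_simps)
  qed
  finally show ?thesis .
qed

definition ga_inner :: "nat \<Rightarrow> bool list \<Rightarrow> nat \<Rightarrow> bool list pmf" where
  "ga_inner lam x l = bind_pmf (replicate_pmf lam (mut_ell l x)) (\<lambda>ys.
     bind_pmf (best_uniform ys) (\<lambda>x'.
     bind_pmf (replicate_pmf lam (crossover (1 / real lam) x x')) (\<lambda>zs.
       let y = best_first zs in return_pmf (if onemax x \<le> onemax y then y else x))))"

lemma ga_step_inner: "ga_step n lam x = bind_pmf (binomial_pmf n (real lam / real n)) (ga_inner lam x)"
  by (simp add: ga_step_def ga_inner_def[abs_def] sample_list_eq)

lemma set_pmf_binomial_sub: "0 \<le> p \<Longrightarrow> p \<le> 1 \<Longrightarrow> set_pmf (binomial_pmf n p) \<subseteq> {..n}"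
  by (subst set_pmf_binomial_eq) (auto split: if_splits)

lemma ga_inner_bound:
  assumes lam: "2 \<le> lam" and len: "length x = n" and l: "l \<le> n" "real lam / 2 \<le> real l" "l \<le> 2 * lam"
  shows "cX * (1 - (1 - real (card (zeros x)) / real n) ^ (l * lam))
     \<le> measure_pmf.prob (ga_inner lam x l) {y. onemax x < onemax y}"
proof -
  let ?good = "\<lambda>z. onemax x + 2 \<le> onemax z + l"
  let ?M = "mut_ell l x"
  let ?q = "real (card (zeros x)) / real n"
  have setM: "set_pmf ?M = (\<lambda>S. flip_set S x) ` subsU n l" using mut_ell_set[of l x] l len by simp
  have step: "cX \<le> measure_pmf.prob (bind_pmf (best_uniform ys) (\<lambda>x'.
     bind_pmf (replicate_pmf lam (crossover (1 / real lam) x x')) (\<lambda>zs.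
       let y = best_first zs in return_pmf (if onemax x \<le> onemax y then y else x)))) {y. onemax x < onemax y}"
    if ys: "ys \<in> set_pmf (replicate_pmf lam ?M)" and g: "\<exists>y\<in>set ys. ?good y" for ys
  proof -
    obtain y where y: "y \<in> set ys" "?good y" using g by blast
    have ne: "ys \<noteq> []" using y by auto
    have ysM: "set ys \<subseteq> set_pmf ?M" using ys by (auto simp: set_replicate_pmf)
    have "cX * measure_pmf.prob (best_uniform ys) {x'. True} \<le> measure_pmf.prob (bind_pmf (best_uniform ys) (\<lambda>x'.
     bind_pmf (replicate_pmf lam (crossover (1 / real lam) x x')) (\<lambda>zs.
       let y = best_first zs in return_pmf (if onemax x \<le> onemax y then y else x)))) {y. onemax x < onemax y}"
    proof (rule prob_bind_ge)
      fix x' assume x': "x' \<in> set_pmf (best_uniform ys)"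
      have x'in: "x' \<in> set ys" and x'ge: "onemax y \<le> onemax x'"
        using best_uniform[OF ne x'] y by auto
      then obtain S where S: "S \<in> subsU n l" "x' = flip_set S x" using ysM setM by auto
      have Ssub: "S \<subseteq> {..<length x}" "card S = l" using S len by (auto simp: subsU_def)
      have "?good x'" using y(2) x'ge by linarith
      then have "S \<inter> zeros x \<noteq> {}" using flip_good_iff[OF Ssub] S by simp
      then obtain i where i: "i \<in> S" "\<not> x!i" by (auto simp: zeros_def)
      show "cX \<le> measure_pmf.prob (bind_pmf (replicate_pmf lam (crossover (1 / real lam) x x')) (\<lambda>zs.
       let y = best_first zs in return_pmf (if onemax x \<le> onemax y then y else x))) {y. onemax x < onemax y}"
      proof (rule cross_phase[OF lam _ _ _ i])
        show "length x' = length x" using S by simp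
        show "S = {i. i < length x \<and> x'!i \<noteq> x!i}" using diff_flip[OF Ssub(1)] S by simp
        show "card S \<le> 2 * lam" using Ssub l by simp
      qed
    qed (use cX_pos in auto)
    then show ?thesis by simp
  qed
  have "cX * measure_pmf.prob (replicate_pmf lam ?M) {ys. \<exists>y\<in>set ys. ?good y}
      \<le> measure_pmf.prob (ga_inner lam x l) {y. onemax x < onemax y}"
    unfolding ga_inner_def by (rule prob_bind_ge) (use step cX_pos in auto)
  moreover have "measure_pmf.prob (replicate_pmf lam ?M) {ys. \<exists>y\<in>set ys. ?good y}
      = 1 - (1 - measure_pmf.prob ?M {y. ?good y}) ^ lam"
    by (rule prob_replicate_ex)
  moreover have "1 - measure_pmf.prob ?M {y. ?good y} = measure_pmf.prob ?M {y. \<not> ?good y}"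
    by (subst measure_pmf.prob_compl[symmetric]) (auto intro!: arg_cong[where f="measure_pmf.prob _"])
  moreover have "measure_pmf.prob ?M {y. \<not> ?good y} \<le> (1 - ?q) ^ l"
    by (rule mut_not_good[OF len l(1)])
  moreover have "(measure_pmf.prob ?M {y. \<not> ?good y}) ^ lam \<le> ((1 - ?q) ^ l) ^ lam"
    using calculation(4) by (intro power_mono) auto
  moreover have "((1 - ?q) ^ l) ^ lam = (1 - ?q) ^ (l * lam)" by (simp add: power_mult)
  ultimately show ?thesis using cX_pos
    by (smt (verit, best) mult_left_mono)
qed

lemma ga_improve:
  assumes lam: "8 \<le> lam" "lam \<le> n" and len: "length x = n"
  defines "X \<equiv> real lam ^ 2 * real (card (zeros x)) / (2 * real n)"
  shows "cX * (X / (1 + X)) / 2 \<le> measure_pmf.prob (ga_step n lam x) {y. onemax x < onemax y}"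
proof -
  let ?q = "real (card (zeros x)) / real n"
  have zs: "zeros x \<subseteq> {..<n}" using len by (auto simp: zeros_def)
  have dn: "card (zeros x) \<le> n" using card_mono[OF _ zs] by simp
  have q01: "0 \<le> ?q" "?q \<le> 1" using dn by (cases "n = 0", auto simp: field_simps)+
  have X0: "0 \<le> X" unfolding X_def by simp
  have "cX * (X / (1 + X)) * measure_pmf.prob (binomial_pmf n (real lam / real n)) {l. real lam / 2 \<le> real l \<and> l \<le> 2 * lam}
     \<le> measure_pmf.prob (ga_step n lam x) {y. onemax x < onemax y}"
    unfolding ga_step_inner
  proof (rule prob_bind_ge)
    fix l assume l: "l \<in> set_pmf (binomial_pmf n (real lam / real n))" "real lam / 2 \<le> real l \<and> l \<le> 2 * lam"
    have ln: "l \<le> n" using l(1) set_pmf_binomial_sub[of "real lam / real n" n] lam by auto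
    have A: "cX * (1 - (1 - ?q) ^ (l * lam)) \<le> measure_pmf.prob (ga_inner lam x l) {y. onemax x < onemax y}"
      using ga_inner_bound[of lam x n l] lam len ln l(2) by auto
    have B: "real (l * lam) * ?q / (1 + real (l * lam) * ?q) \<le> 1 - (1 - ?q) ^ (l * lam)"
      by (rule one_minus_pow_ge[OF q01])
    have "X \<le> real (l * lam) * ?q"
    proof -
      have h: "real lam \<le> 2 * real l" using l(2) by linarith
      have "real lam * real lam \<le> (2 * real l) * real lam" by (rule mult_right_mono[OF h]) simp
      then have "real lam ^ 2 / 2 \<le> real l * real lam" by (simp add: power2_eq_square)
      then have "real lam ^ 2 / 2 * ?q \<le> real l * real lam * ?q" by (rule mult_right_mono) (use q01 in auto)
      then show ?thesis unfolding X_def by (simp add: field_simps)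
    qed
    then have C: "X / (1 + X) \<le> real (l * lam) * ?q / (1 + real (l * lam) * ?q)"
      by (rule frac_mono[OF X0])
    show "cX * (X / (1 + X)) \<le> measure_pmf.prob (ga_inner lam x l) {y. onemax x < onemax y}"
      using A B C cX_pos by (smt (verit, best) mult_left_mono)
  qed (use cX_pos X0 in auto)
  moreover have "1 / 2 \<le> measure_pmf.prob (binomial_pmf n (real lam / real n)) {l. real lam / 2 \<le> real l \<and> l \<le> 2 * lam}"
    by (rule binom_conc[OF lam])
  moreover have "0 \<le> cX * (X / (1 + X))" using cX_pos X0 by simp
  ultimately have "cX * (X / (1 + X)) * (1 / 2) \<le> measure_pmf.prob (ga_step n lam x) {y. onemax x < onemax y}"
    by (meson mult_left_mono order_trans)
  then show ?thesis by simp
qed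

lemma set_crossover_len: "length x' = length x \<Longrightarrow> z \<in> set_pmf (crossover p x x') \<Longrightarrow> length z = length x"
  by (auto simp: crossover_mask)

lemma ga_support:
  assumes lam: "1 \<le> lam" "lam \<le> n" and len: "length x = n" and y: "y \<in> set_pmf (ga_step n lam x)"
  shows "length y = n \<and> onemax x \<le> onemax y"
proof -
  obtain l ys x' zs where l: "l \<in> set_pmf (binomial_pmf n (real lam / real n))"
    and ys: "ys \<in> set_pmf (replicate_pmf lam (mut_ell l x))"
    and x': "x' \<in> set_pmf (best_uniform ys)"
    and zs: "zs \<in> set_pmf (replicate_pmf lam (crossover (1 / real lam) x x'))"
    and yeq: "y = (if onemax x \<le> onemax (best_first zs) then best_first zs else x)"
    using y unfolding ga_step_inner ga_inner_def by (auto simp: Let_def)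
  have ln: "l \<le> n" using l set_pmf_binomial_sub[of "real lam / real n" n] lam by auto
  have setM: "set_pmf (mut_ell l x) = (\<lambda>S. flip_set S x) ` subsU n l" using mut_ell_set[of l x] ln len by simp
  have yse: "length ys = lam" "set ys \<subseteq> set_pmf (mut_ell l x)" using ys by (auto simp: set_replicate_pmf)
  then have ne: "ys \<noteq> []" using lam by auto
  have "x' \<in> set ys" using best_uniform[OF ne x'] by simp
  then have lx': "length x' = length x" using yse setM by auto
  have zse: "length zs = lam" "set zs \<subseteq> set_pmf (crossover (1 / real lam) x x')" using zs by (auto simp: set_replicate_pmf)
  then have nez: "zs \<noteq> []" using lam by auto
  have "best_first zs \<in> set zs" using best_first(1)[OF nez] .
  then have "length (best_first zs) = length x" using zse set_crossover_len[OF lx'] by blast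
  then show ?thesis using yeq len by auto
qed

lemma potential_sum:
  fixes K :: "'s \<Rightarrow> 's pmf" and c \<Phi> :: "'s \<Rightarrow> ennreal"
  assumes I0: "set_pmf M0 \<subseteq> I" and IK: "\<And>s. s \<in> I \<Longrightarrow> set_pmf (K s) \<subseteq> I"
    and step: "\<And>s. s \<in> I \<Longrightarrow> c s + (\<integral>\<^sup>+s'. \<Phi> s' \<partial>K s) \<le> \<Phi> s"
  shows "(\<Sum>t. \<integral>\<^sup>+s. c s \<partial>((\<lambda>M. bind_pmf M K) ^^ t) M0) \<le> (\<integral>\<^sup>+s. \<Phi> s \<partial>M0)"
proof -
  define M where "M t = ((\<lambda>M. bind_pmf M K) ^^ t) M0" for t
  have MS: "M (Suc t) = bind_pmf (M t) K" for t by (simp add: M_def)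
  have M0: "M 0 = M0" by (simp add: M_def)
  have MI: "set_pmf (M t) \<subseteq> I" for t
  proof (induction t)
    case 0 then show ?case using I0 M0 by simp
  next
    case (Suc t) then show ?case using IK by (auto simp: MS)
  qed
  have main: "(\<Sum>t<T. \<integral>\<^sup>+s. c s \<partial>M t) + (\<integral>\<^sup>+s. \<Phi> s \<partial>M T) \<le> (\<integral>\<^sup>+s. \<Phi> s \<partial>M0)" for T
  proof (induction T)
    case 0 then show ?case by (simp add: M0)
  next
    case (Suc T)
    have "(\<integral>\<^sup>+s. c s \<partial>M T) + (\<integral>\<^sup>+s. \<Phi> s \<partial>M (Suc T)) = (\<integral>\<^sup>+s. (c s + (\<integral>\<^sup>+s'. \<Phi> s' \<partial>K s)) \<partial>M T)"
      by (simp add: MS nn_integral_add)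
    also have "\<dots> \<le> (\<integral>\<^sup>+s. \<Phi> s \<partial>M T)"
      by (rule nn_integral_mono_AE) (use MI step in \<open>auto simp: AE_measure_pmf_iff\<close>)
    finally have A: "(\<integral>\<^sup>+s. c s \<partial>M T) + (\<integral>\<^sup>+s. \<Phi> s \<partial>M (Suc T)) \<le> (\<integral>\<^sup>+s. \<Phi> s \<partial>M T)" .
    have "(\<Sum>t<Suc T. \<integral>\<^sup>+s. c s \<partial>M t) + (\<integral>\<^sup>+s. \<Phi> s \<partial>M (Suc T))
        = (\<Sum>t<T. \<integral>\<^sup>+s. c s \<partial>M t) + ((\<integral>\<^sup>+s. c s \<partial>M T) + (\<integral>\<^sup>+s. \<Phi> s \<partial>M (Suc T)))"
      by (simp add: add.assoc)
    also have "\<dots> \<le> (\<Sum>t<T. \<integral>\<^sup>+s. c s \<partial>M t) + (\<integral>\<^sup>+s. \<Phi> s \<partial>M T)"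
      by (rule add_left_mono[OF A])
    also have "\<dots> \<le> (\<integral>\<^sup>+s. \<Phi> s \<partial>M0)" by (rule Suc.IH)
    finally show ?case .
  qed
  have part: "(\<Sum>t<T. \<integral>\<^sup>+s. c s \<partial>M t) \<le> (\<integral>\<^sup>+s. \<Phi> s \<partial>M0)" for T
    using main[of T] by (rule order_trans[rotated]) simp
  have "(\<Sum>t. \<integral>\<^sup>+s. c s \<partial>M t) \<le> (\<integral>\<^sup>+s. \<Phi> s \<partial>M0)"
    unfolding suminf_eq_SUP by (rule SUP_least) (rule part)
  then show ?thesis by (simp add: M_def)
qed

lemma expectation_le_ind:
  fixes f :: "'a \<Rightarrow> real"
  assumes "\<And>s. s \<in> set_pmf M \<Longrightarrow> f s \<le> a - b * indicator X s" "\<And>s. \<bar>f s\<bar> \<le> B"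
  shows "measure_pmf.expectation M f \<le> a - b * measure_pmf.prob M X"
proof -
  have "measure_pmf.expectation M f \<le> measure_pmf.expectation M (\<lambda>s. a - b * indicator X s)"
    apply (rule integral_mono_AE)
      apply (rule measure_pmf.integrable_const_bound[where B=B]) using assms(2) apply auto[2]
     apply (rule measure_pmf.integrable_const_bound[where B="\<bar>a\<bar> + \<bar>b\<bar>"]) apply (auto simp: indicator_def)[2]
    using assms(1) by (auto simp: AE_measure_pmf_iff)
  also have "\<dots> = a - b * measure_pmf.prob M X"
  proof -
    have i1: "integrable M (\<lambda>s. b * indicator X s)"
      by (rule measure_pmf.integrable_const_bound[where B="\<bar>b\<bar>"]) (auto simp: indicator_def)
    have "measure_pmf.expectation M (\<lambda>s. a - b * indicator X s)
        = measure_pmf.expectation M (\<lambda>_. a) - measure_pmf.expectation M (\<lambda>s. b * indicator X s)"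
      by (rule Bochner_Integration.integral_diff[OF _ i1]) simp
    moreover have "measure_pmf.expectation M (\<lambda>s. b * indicator X s) = b * measure_pmf.prob M X"
    proof -
      have i2: "integrable M (indicator X :: 'a \<Rightarrow> real)"
        by (rule measure_pmf.integrable_const_bound[where B=1]) (auto simp: indicator_def)
      have "measure_pmf.expectation M (indicator X :: 'a \<Rightarrow> real) = measure_pmf.prob M X"
        by simp
      then show ?thesis by (subst integral_mult_right_zero) simp
    qed
    ultimately show ?thesis by simp
  qed
  finally show ?thesis .
qed

definition Wsum :: "(nat \<Rightarrow> real) \<Rightarrow> nat \<Rightarrow> real" where
  "Wsum w d = (\<Sum>j\<in>{1..d}. w j)"

lemma Wsum_Suc: "Wsum w (Suc d) = Wsum w d + w (Suc d)"
  by (simp add: Wsum_def)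

lemma Wsum_mono: "(\<And>j. 0 \<le> w j) \<Longrightarrow> d' \<le> d \<Longrightarrow> Wsum w d' \<le> Wsum w d"
  unfolding Wsum_def by (rule sum_mono2) auto

lemma Wsum_nonneg: "(\<And>j. 0 \<le> w j) \<Longrightarrow> 0 \<le> Wsum w d"
  unfolding Wsum_def by (rule sum_nonneg) auto

lemma Wsum_diff:
  assumes mono: "\<And>i j. i \<le> j \<Longrightarrow> w j \<le> w i" and le: "d' \<le> d"
  shows "Wsum w d' + real (d - d') * w d \<le> Wsum w d"
  using le
proof (induction d rule: dec_induct)
  case base then show ?case by simp
next
  case (step m)
  have "real (Suc m - d') * w (Suc m) = real (m - d') * w (Suc m) + w (Suc m)"
    using step.hyps by (simp add: Suc_diff_le algebra_simps)
  moreover have "real (m - d') * w (Suc m) \<le> real (m - d') * w m"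
    using mono[of m "Suc m"] by (intro mult_left_mono) auto
  ultimately show ?case using step.IH by (simp add: Wsum_Suc)
qed

definition PhiF :: "nat \<Rightarrow> nat \<Rightarrow> (nat \<Rightarrow> real) \<Rightarrow> (nat \<Rightarrow> real) \<Rightarrow> bool \<times> bool list \<Rightarrow> real" where
  "PhiF n D w v s = (if fst s then Wsum v (n - onemax (snd s)) else Wsum v D + Wsum w (n - onemax (snd s)))"

definition InvI :: "nat \<Rightarrow> nat \<Rightarrow> (bool \<times> bool list) set" where
  "InvI n D = {s. length (snd s) = n \<and> fst s = (n - onemax (snd s) \<le> D)}"

lemma onemax_eq_length:
  assumes "onemax x = length x" shows "x = replicate (length x) True"
proof -
  have sub: "ones x \<subseteq> {..<length x}" by (auto simp: ones_def)
  have "card (ones x) = card {..<length x}" using assms by (simp add: onemax_card)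
  then have "ones x = {..<length x}" using sub by (intro card_subset_eq) auto
  then have "\<forall>i<length x. x!i" by (auto simp: ones_def)
  then show ?thesis by (intro nth_equalityI) auto
qed

lemma onemax_replicate: "onemax (replicate n True) = n"
  by (simp add: onemax_def)

context
  fixes n lam1 D lam2 :: nat and w v :: "nat \<Rightarrow> real"
  assumes lam: "1 \<le> lam1" "1 \<le> lam2" "lam2 \<le> n"
    and w0: "\<And>j. 0 \<le> w j" and wmono: "\<And>i j. i \<le> j \<Longrightarrow> w j \<le> w i" and v0: "\<And>j. 0 \<le> v j"
    and HEA: "\<And>x. length x = n \<Longrightarrow> D < n - onemax x \<Longrightarrow>
        \<exists>k\<ge>1. real lam1 \<le> w (n - onemax x) * real k * measure_pmf.prob (ea_step n lam1 x) {y. onemax x + k \<le> onemax y}"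
    and HGA: "\<And>x. length x = n \<Longrightarrow> 0 < n - onemax x \<Longrightarrow> n - onemax x \<le> D \<Longrightarrow>
        real (2 * lam2) \<le> v (n - onemax x) * measure_pmf.prob (ga_step n lam2 x) {y. onemax x < onemax y}"
begin

abbreviation "Phi \<equiv> PhiF n D w v"
abbreviation "BB \<equiv> Wsum v n + Wsum v D + Wsum w n"

lemma Phi_bound: "\<bar>Phi s\<bar> \<le> BB"
proof -
  have "Wsum v (n - onemax (snd s)) \<le> Wsum v n" by (rule Wsum_mono) (use v0 in auto)
  moreover have "Wsum w (n - onemax (snd s)) \<le> Wsum w n" by (rule Wsum_mono) (use w0 in auto)
  moreover have "0 \<le> Wsum v (n - onemax (snd s))" "0 \<le> Wsum w (n - onemax (snd s))" "0 \<le> Wsum v D" "0 \<le> Wsum w n"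
    using Wsum_nonneg w0 v0 by auto
  ultimately show ?thesis by (auto simp: PhiF_def)
qed

lemma Phi_nonneg: "0 \<le> Phi s"
  using Wsum_nonneg w0 v0 by (auto simp: PhiF_def intro: add_nonneg_nonneg)

lemma step_real:
  assumes s: "s \<in> InvI n D"
  shows "real (iter_cost n lam1 lam2 s) + measure_pmf.expectation (combined_step n lam1 D lam2 s) Phi \<le> Phi s"
proof -
  obtain b x where sx: "s = (b, x)" by (cases s)
  have len: "length x = n" and bD: "b = (n - onemax x \<le> D)" using s sx by (auto simp: InvI_def)
  define d where "d = n - onemax x"
  have omx: "onemax x \<le> n" using onemax_le[of x] len by simp
  show ?thesis
  proof (cases b)
    case True
    then have dD: "d \<le> D" using bD d_def by simp
    have CS: "combined_step n lam1 D lam2 s = map_pmf (\<lambda>y. (True, y)) (ga_step n lam2 x)"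
      using sx True by (simp add: combined_step_def)
    have supp: "length y = n \<and> onemax x \<le> onemax y" if "y \<in> set_pmf (ga_step n lam2 x)" for y
      using ga_support[OF lam(2) lam(3) len that] .
    show ?thesis
    proof (cases "d = 0")
      case True
      then have "onemax x = n" using omx d_def by simp
      then have xr: "x = replicate n True" using onemax_eq_length[of x] len by simp
      have "measure_pmf.expectation (ga_step n lam2 x) (\<lambda>y. Phi (True, y)) \<le> 0 - 0 * measure_pmf.prob (ga_step n lam2 x) {}"
      proof (rule expectation_le_ind)
        fix y assume yy: "y \<in> set_pmf (ga_step n lam2 x)"
        have "onemax x \<le> onemax y" using supp[OF yy] by simp
        then have "n - onemax y = 0" using \<open>onemax x = n\<close> by simp
        then show "Phi (True, y) \<le> 0 - 0 * indicator {} y" by (simp add: PhiF_def Wsum_def)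
      qed (rule Phi_bound)
      moreover have "Phi s = 0" using sx \<open>b\<close> True d_def by (simp add: PhiF_def Wsum_def)
      moreover have "iter_cost n lam1 lam2 s = 0" using sx xr by (simp add: iter_cost_def)
      ultimately show ?thesis using CS by simp
    next
      case False
      then have d1: "0 < d" by simp
      have notopt: "x \<noteq> replicate n True" using d1 d_def onemax_replicate[of n] by auto
      have cost: "iter_cost n lam1 lam2 s = 2 * lam2" using sx \<open>b\<close> notopt by (simp add: iter_cost_def)
      have HG: "real (2 * lam2) \<le> v d * measure_pmf.prob (ga_step n lam2 x) {y. onemax x < onemax y}"
        using HGA[OF len] d1 dD d_def by simp
      have "measure_pmf.expectation (ga_step n lam2 x) (\<lambda>y. Phi (True, y))
          \<le> Wsum v d - v d * measure_pmf.prob (ga_step n lam2 x) {y. onemax x < onemax y}"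
      proof (rule expectation_le_ind)
        fix y assume y: "y \<in> set_pmf (ga_step n lam2 x)"
        have le: "n - onemax y \<le> d" using supp[OF y] d_def by (auto intro: diff_le_mono2)
        show "Phi (True, y) \<le> Wsum v d - v d * indicator {y. onemax x < onemax y} y"
        proof (cases "onemax x < onemax y")
          case True
          then have "n - onemax y \<le> d - 1" using supp[OF y] d_def omx by simp
          then have "Wsum v (n - onemax y) \<le> Wsum v (d - 1)" by (rule Wsum_mono[rotated]) (use v0 in auto)
          moreover have "Wsum v d = Wsum v (d - 1) + v d" using d1 Wsum_Suc[of v "d - 1"] by simp
          ultimately show ?thesis using True by (simp add: PhiF_def)
        next
          case False
          then show ?thesis using Wsum_mono[of v, OF _ le] v0 by (simp add: PhiF_def)
        qed
      qed (rule Phi_bound)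
      moreover have "Phi s = Wsum v d" using sx \<open>b\<close> d_def by (simp add: PhiF_def)
      ultimately show ?thesis using CS cost HG by simp
    qed
  next
    case False
    then have dD: "D < d" using bD d_def by simp
    have CS: "combined_step n lam1 D lam2 s = map_pmf (\<lambda>y. (n - onemax y \<le> D, y)) (ea_step n lam1 x)"
      using sx False by (simp add: combined_step_def)
    have supp: "length y = n \<and> onemax x \<le> onemax y" if "y \<in> set_pmf (ea_step n lam1 x)" for y
      using ea_step_support[OF lam(1) that] len by simp
    have notopt: "x \<noteq> replicate n True" using dD d_def onemax_replicate[of n] by auto
    have cost: "iter_cost n lam1 lam2 s = lam1" using sx False notopt by (simp add: iter_cost_def)
    obtain k where k: "k \<ge> 1" "real lam1 \<le> w d * real k * measure_pmf.prob (ea_step n lam1 x) {y. onemax x + k \<le> onemax y}"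
      using HEA[OF len] dD d_def by auto
    have "measure_pmf.expectation (ea_step n lam1 x) (\<lambda>y. Phi (n - onemax y \<le> D, y))
        \<le> (Wsum v D + Wsum w d) - (w d * real k) * measure_pmf.prob (ea_step n lam1 x) {y. onemax x + k \<le> onemax y}"
    proof (rule expectation_le_ind)
      fix y assume y: "y \<in> set_pmf (ea_step n lam1 x)"
      define d' where "d' = n - onemax y"
      have omy: "onemax y \<le> n" using onemax_le[of y] supp[OF y] by simp
      have le: "d' \<le> d" using supp[OF y] d_def d'_def by (auto intro: diff_le_mono2)
      have P1: "Phi (n - onemax y \<le> D, y) \<le> Wsum v D + Wsum w d'"
      proof (cases "d' \<le> D")
        case True
        then have "Wsum v d' \<le> Wsum v D" by (rule Wsum_mono[rotated]) (use v0 in auto)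
        then show ?thesis using True Wsum_nonneg[of w d'] w0 d'_def by (simp add: PhiF_def)
      next
        case False
        then show ?thesis using d'_def by (simp add: PhiF_def)
      qed
      have WD: "Wsum w d' + real (d - d') * w d \<le> Wsum w d" by (rule Wsum_diff[OF wmono le])
      show "Phi (n - onemax y \<le> D, y) \<le> (Wsum v D + Wsum w d) - (w d * real k) * indicator {y. onemax x + k \<le> onemax y} y"
      proof (cases "onemax x + k \<le> onemax y")
        case True
        then have "k \<le> d - d'" using d_def d'_def omy by simp
        then have "real k * w d \<le> real (d - d') * w d" using w0[of d] by (intro mult_right_mono) auto
        then show ?thesis using True P1 WD by (simp add: algebra_simps)
      next
        case False
        have "0 \<le> real (d - d') * w d" using w0[of d] by simp
        then show ?thesis using False P1 WD by simp
      qed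
    qed (rule Phi_bound)
    moreover have "Phi s = Wsum v D + Wsum w d" using sx False d_def by (simp add: PhiF_def)
    ultimately show ?thesis using CS cost k(2) by (simp add: algebra_simps)
  qed
qed

lemma inv_step: "s \<in> InvI n D \<Longrightarrow> set_pmf (combined_step n lam1 D lam2 s) \<subseteq> InvI n D"
proof -
  assume s: "s \<in> InvI n D"
  obtain b x where sx: "s = (b, x)" by (cases s)
  have len: "length x = n" and bD: "b = (n - onemax x \<le> D)" using s sx by (auto simp: InvI_def)
  show ?thesis
  proof (cases b)
    case True
    show ?thesis
    proof
      fix s' assume "s' \<in> set_pmf (combined_step n lam1 D lam2 s)"
      then obtain y where y: "y \<in> set_pmf (ga_step n lam2 x)" "s' = (True, y)"
        using sx True by (auto simp: combined_step_def)
      have "length y = n \<and> onemax x \<le> onemax y" using ga_support[OF lam(2) lam(3) len y(1)] .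
      then show "s' \<in> InvI n D" using y bD True by (auto simp: InvI_def)
    qed
  next
    case False
    show ?thesis
    proof
      fix s' assume "s' \<in> set_pmf (combined_step n lam1 D lam2 s)"
      then obtain y where y: "y \<in> set_pmf (ea_step n lam1 x)" "s' = (n - onemax y \<le> D, y)"
        using sx False by (auto simp: combined_step_def)
      have "length y = n" using ea_step_support[OF lam(1) y(1)] len by simp
      then show "s' \<in> InvI n D" using y by (auto simp: InvI_def)
    qed
  qed
qed

lemma init_inv: "set_pmf (init_state n D) \<subseteq> InvI n D"
proof -
  have fin: "finite {x :: bool list. length x = n}" using finite_lists_length_eq[of "UNIV::bool set" n] by simp
  have ne: "{x :: bool list. length x = n} \<noteq> {}" by (auto intro: exI[of _ "replicate n True"])
  show ?thesis using fin ne by (auto simp: init_state_def InvI_def)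
qed

lemma expected_evals_bound:
  "expected_evals n lam1 D lam2 \<le> ennreal (1 + (Wsum v D + Wsum w n))"
proof -
  let ?K = "combined_step n lam1 D lam2"
  let ?c = "\<lambda>s. ennreal (real (iter_cost n lam1 lam2 s))"
  let ?P = "\<lambda>s. ennreal (Phi s)"
  have step: "?c s + (\<integral>\<^sup>+s'. ?P s' \<partial>?K s) \<le> ?P s" if s: "s \<in> InvI n D" for s
  proof -
    have int: "integrable (measure_pmf (?K s)) Phi"
      by (rule measure_pmf.integrable_const_bound[where B=BB]) (auto intro: Phi_bound)
    have "(\<integral>\<^sup>+s'. ?P s' \<partial>?K s) = ennreal (measure_pmf.expectation (?K s) Phi)"
      by (rule nn_integral_eq_integral[OF int]) (auto intro: Phi_nonneg)
    moreover have "0 \<le> measure_pmf.expectation (?K s) Phi"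
      by (rule Bochner_Integration.integral_nonneg) (rule Phi_nonneg)
    ultimately have "?c s + (\<integral>\<^sup>+s'. ?P s' \<partial>?K s) = ennreal (real (iter_cost n lam1 lam2 s) + measure_pmf.expectation (?K s) Phi)"
      by (simp add: ennreal_plus)
    also have "\<dots> \<le> ?P s" by (rule ennreal_leI[OF step_real[OF s]])
    finally show ?thesis .
  qed
  have sum: "(\<Sum>t. \<integral>\<^sup>+s. ?c s \<partial>((\<lambda>M. bind_pmf M ?K) ^^ t) (init_state n D)) \<le> (\<integral>\<^sup>+s. ?P s \<partial>init_state n D)"
    by (rule potential_sum[OF init_inv inv_step step])
  have "(\<integral>\<^sup>+s. ?P s \<partial>init_state n D) \<le> (\<integral>\<^sup>+s. ennreal (Wsum v D + Wsum w n) \<partial>init_state n D)"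
  proof (rule nn_integral_mono_AE)
    show "AE s in measure_pmf (init_state n D). ?P s \<le> ennreal (Wsum v D + Wsum w n)"
      unfolding AE_measure_pmf_iff
    proof
      fix s assume "s \<in> set_pmf (init_state n D)"
      then have s: "s \<in> InvI n D" using init_inv by blast
      have "Phi s \<le> Wsum v D + Wsum w n"
      proof (cases "fst s")
        case True
        then have "n - onemax (snd s) \<le> D" using s by (simp add: InvI_def)
        then have "Wsum v (n - onemax (snd s)) \<le> Wsum v D" by (rule Wsum_mono[rotated]) (use v0 in auto)
        then show ?thesis using True Wsum_nonneg[of w n] w0 by (simp add: PhiF_def)
      next
        case False
        have "Wsum w (n - onemax (snd s)) \<le> Wsum w n" by (rule Wsum_mono) (use w0 in auto)
        then show ?thesis using False by (simp add: PhiF_def)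
      qed
      then show "?P s \<le> ennreal (Wsum v D + Wsum w n)" by (rule ennreal_leI)
    qed
  qed
  also have "\<dots> = ennreal (Wsum v D + Wsum w n)" by (simp add: measure_pmf.emeasure_space_1)
  finally have A: "(\<Sum>t. \<integral>\<^sup>+s. ?c s \<partial>((\<lambda>M. bind_pmf M ?K) ^^ t) (init_state n D)) \<le> ennreal (Wsum v D + Wsum w n)"
    using sum by (rule order_trans[rotated])
  have nn: "0 \<le> Wsum v D + Wsum w n" using Wsum_nonneg w0 v0 by (simp add: add_nonneg_nonneg)
  have "expected_evals n lam1 D lam2 = 1 + (\<Sum>t. \<integral>\<^sup>+s. ?c s \<partial>((\<lambda>M. bind_pmf M ?K) ^^ t) (init_state n D))"
    by (simp add: expected_evals_def state_after_def)
  also have "\<dots> \<le> 1 + ennreal (Wsum v D + Wsum w n)" using A by (rule add_left_mono)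
  also have "\<dots> = ennreal (1 + (Wsum v D + Wsum w n))" using nn by (simp add: ennreal_plus)
  finally show ?thesis .
qed

end

lemma harm_tail:
  assumes "1 \<le> a" "a \<le> b"
  shows "(\<Sum>j\<in>{Suc a..b}. 1 / real j) \<le> ln (real b) - ln (real a)"
  using assms(2)
proof (induction b rule: dec_induct)
  case base then show ?case by simp
next
  case (step m)
  have m1: "1 \<le> m" using assms step.hyps by simp
  have "ln (real m / real (Suc m)) \<le> real m / real (Suc m) - 1"
    by (rule ln_le_minus_one) (use m1 in auto)
  moreover have "real m / real (Suc m) - 1 = - (1 / real (Suc m))" by (simp add: field_simps)
  moreover have "ln (real m / real (Suc m)) = ln (real m) - ln (real (Suc m))"
    using m1 by (simp add: ln_div)
  ultimately have A: "1 / real (Suc m) \<le> ln (real (Suc m)) - ln (real m)" by linarith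
  have "{Suc a..Suc m} = insert (Suc m) {Suc a..m}" using step.hyps by auto
  then have "(\<Sum>j\<in>{Suc a..Suc m}. 1 / real j) = 1 / real (Suc m) + (\<Sum>j\<in>{Suc a..m}. 1 / real j)"
    by simp
  then show ?case using A step.IH by linarith
qed

lemma harm_full:
  "(\<Sum>j\<in>{1..b}. 1 / real j) \<le> 1 + ln (real b)"
proof (cases "b = 0")
  case True then show ?thesis by simp
next
  case False
  then have "{1..b} = insert 1 {Suc 1..b}" by auto
  then have "(\<Sum>j\<in>{1..b}. 1 / real j) = 1 + (\<Sum>j\<in>{Suc 1..b}. 1 / real j)" by simp
  moreover have "(\<Sum>j\<in>{Suc 1..b}. 1 / real j) \<le> ln (real b) - ln (real 1)"
    by (rule harm_tail) (use False in auto)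
  ultimately show ?thesis by simp
qed

definition w1 :: "nat \<Rightarrow> nat \<Rightarrow> nat \<Rightarrow> real" where
  "w1 n lam j = real lam + exp 2 * real n / real j"

definition wp :: "nat \<Rightarrow> nat \<Rightarrow> bool \<Rightarrow> nat \<Rightarrow> nat \<Rightarrow> real" where
  "wp n lam mb k j = (if mb \<and> n \<le> k * j then min (w1 n lam j) (2 * real lam / real k) else w1 n lam j)"

definition wE :: "nat \<Rightarrow> nat \<Rightarrow> nat \<Rightarrow> bool \<Rightarrow> nat \<Rightarrow> nat \<Rightarrow> real" where
  "wE n lam D mb k j = wp n lam mb k (max j (Suc D))"

definition vG :: "nat \<Rightarrow> nat \<Rightarrow> nat \<Rightarrow> real" where
  "vG n lam j = 4 / cX * (real lam + 2 * real n / (real lam * real j))"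

lemma w1_nonneg: "0 \<le> w1 n lam j" by (simp add: w1_def)

lemma w1_mono: "1 \<le> i \<Longrightarrow> i \<le> j \<Longrightarrow> w1 n lam j \<le> w1 n lam i"
  unfolding w1_def by (auto intro!: divide_left_mono)

lemma wp_nonneg: "0 \<le> wp n lam mb k j"
  by (simp add: wp_def w1_nonneg)

lemma wp_mono: "1 \<le> i \<Longrightarrow> i \<le> j \<Longrightarrow> wp n lam mb k j \<le> wp n lam mb k i"
proof -
  assume ij: "1 \<le> i" "i \<le> j"
  have m: "w1 n lam j \<le> w1 n lam i" by (rule w1_mono[OF ij])
  have kij: "k * i \<le> k * j" using ij by simp
  show ?thesis
  proof (cases "mb \<and> n \<le> k * j")
    case True
    then show ?thesis using m by (auto simp: wp_def)
  next
    case False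
    then have "\<not> (mb \<and> n \<le> k * i)" using kij le_trans by blast
    then have "wp n lam mb k i = w1 n lam i" unfolding wp_def by (rule if_not_P)
    moreover have "wp n lam mb k j = w1 n lam j" unfolding wp_def using False by (rule if_not_P)
    ultimately show ?thesis using m by simp
  qed
qed

lemma wE_nonneg: "0 \<le> wE n lam D mb k j"
  by (simp add: wE_def wp_nonneg)

lemma wE_mono: "i \<le> j \<Longrightarrow> wE n lam D mb k j \<le> wE n lam D mb k i"
  unfolding wE_def by (rule wp_mono) auto

lemma vG_nonneg: "0 \<le> vG n lam j"
  using cX_pos by (simp add: vG_def)

lemma frac_identity:
  fixes L a :: real
  assumes "0 < a"
  shows "(L + L / a) * (a / (1 + a)) = L"
proof -
  have a1: "1 + a \<noteq> 0" "a \<noteq> 0" using assms by auto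
  have "L + L / a = L * (1 + a) / a" using a1 by (simp add: field_simps)
  then have "(L + L / a) * (a / (1 + a)) = L * ((1 + a) / a * (a / (1 + a)))" by simp
  also have "(1 + a) / a * (a / (1 + a)) = 1" using a1 by simp
  finally show ?thesis by simp
qed

lemma aux4: fixes c A B :: real shows "0 < c \<Longrightarrow> 4 / c * A * (c * B / 2) = 2 * (A * B)"
  by (simp add: field_simps)

lemma vG_identity:
  fixes L N d c :: real
  assumes "0 < L" "0 < N" "0 < d" "0 < c"
  shows "4 / c * (L + 2 * N / (L * d)) * (c * ((L ^ 2 * d / (2 * N)) / (1 + L ^ 2 * d / (2 * N))) / 2) = 2 * L"
proof -
  define X where "X = L ^ 2 * d / (2 * N)"
  have X0: "0 < X" using assms by (simp add: X_def)
  have "2 * N / (L * d) = L / X" using assms by (simp add: X_def field_simps power2_eq_square)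
  then have "4 / c * (L + 2 * N / (L * d)) * (c * (X / (1 + X)) / 2) = 4 / c * (L + L / X) * (c * (X / (1 + X)) / 2)"
    by simp
  also have "\<dots> = 2 * ((L + L / X) * (X / (1 + X)))"
    using assms(4) by (rule aux4)
  also have "\<dots> = 2 * L" using frac_identity[OF X0, of L] by simp
  finally show ?thesis unfolding X_def .
qed

lemma HGA_v:
  assumes "8 \<le> lam" "lam \<le> n" "length x = n" "0 < n - onemax x"
  shows "real (2 * lam) \<le> vG n lam (n - onemax x) * measure_pmf.prob (ga_step n lam x) {y. onemax x < onemax y}"
proof -
  let ?d = "n - onemax x"
  have cz: "card (zeros x) = ?d" using card_zeros[of x] assms by simp
  define X where "X = real lam ^ 2 * real ?d / (2 * real n)"
  have P: "cX * (X / (1 + X)) / 2 \<le> measure_pmf.prob (ga_step n lam x) {y. onemax x < onemax y}"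
    using ga_improve[OF assms(1,2,3)] cz by (simp add: X_def)
  have n0: "0 < real n" "0 < real lam" "0 < real ?d" using assms by auto
  have X0: "0 < X" using n0 by (simp add: X_def)
  have eq: "vG n lam ?d * (cX * (X / (1 + X)) / 2) = 2 * real lam"
    unfolding vG_def X_def by (rule vG_identity) (use n0 cX_pos in auto)
  have "vG n lam ?d * (cX * (X / (1 + X)) / 2) \<le> vG n lam ?d * measure_pmf.prob (ga_step n lam x) {y. onemax x < onemax y}"
    by (rule mult_left_mono[OF P vG_nonneg])
  then show ?thesis using eq by simp
qed

lemma pow_n_minus_k:
  assumes "2 \<le> n" "k \<le> n"
  shows "exp (-2) \<le> (1 - 1 / real n) ^ (n - k)"
proof -
  have "(1 - 1 / real n) ^ n \<le> (1 - 1 / real n) ^ (n - k)"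
    by (rule power_decreasing) (use assms in auto)
  then show ?thesis using pow_one_minus_inv_ge[OF assms(1)] by linarith
qed

lemma EA1:
  assumes n: "2 \<le> n" and lam: "1 \<le> lam" and len: "length x = n" and d: "0 < n - onemax x"
  shows "real lam \<le> w1 n lam (n - onemax x) * real 1 * measure_pmf.prob (ea_step n lam x) {y. onemax x + 1 \<le> onemax y}"
proof -
  let ?d = "n - onemax x"
  have cz: "card (zeros x) = ?d" using card_zeros[of x] len by simp
  have dn: "?d \<le> n" by simp
  define q0 where "q0 = real ?d / (real n * exp 2)"
  have q0': "q0 = real ?d / real n * exp (-2)" by (simp add: q0_def exp_minus field_simps)
  have Q: "real (card (zeros x) choose 1) * (1 / real n) ^ 1 * (1 - 1 / real n) ^ (n - 1)
      \<le> measure_pmf.prob (bitwise_mut (1 / real n) x) {z. onemax x + 1 \<le> onemax z}"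
    by (rule prob_mut_gain) (use len n d cz in auto)
  have e: "exp (-2) \<le> (1 - 1 / real n) ^ (n - 1)" using pow_n_minus_k[OF n, of 1] n by simp
  have "q0 \<le> real ?d / real n * (1 - 1 / real n) ^ (n - 1)" unfolding q0' by (rule mult_left_mono[OF e]) simp
  then have "q0 \<le> real (card (zeros x) choose 1) * (1 / real n) ^ 1 * (1 - 1 / real n) ^ (n - 1)"
    using cz by simp
  then have qQ: "q0 \<le> measure_pmf.prob (bitwise_mut (1 / real n) x) {z. onemax x + 1 \<le> onemax z}" using Q by linarith
  have q00: "0 \<le> q0" by (simp add: q0_def)
  have q01: "q0 \<le> 1"
  proof -
    have "real ?d / real n \<le> 1" using dn n by simp
    moreover have "exp (-2::real) \<le> 1" by simp
    ultimately show ?thesis unfolding q0' by (intro mult_le_one) auto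
  qed
  have P: "1 - (1 - q0) ^ lam \<le> measure_pmf.prob (ea_step n lam x) {y. onemax x + 1 \<le> onemax y}"
    by (rule ea_step_gain[OF lam qQ q00])
  have B: "real lam * q0 / (1 + real lam * q0) \<le> 1 - (1 - q0) ^ lam" by (rule one_minus_pow_ge[OF q00 q01])
  have pos: "0 < real lam" "0 < real ?d" "0 < real n" using lam d n by auto
  have eq: "w1 n lam ?d * (real lam * q0 / (1 + real lam * q0)) = real lam"
  proof -
    have a0: "0 < real lam * q0" using pos by (simp add: q0_def)
    have "w1 n lam ?d = real lam + real lam / (real lam * q0)"
      unfolding w1_def q0_def using pos by (simp add: field_simps)
    then show ?thesis using frac_identity[OF a0, of "real lam"] by simp
  qed
  have "w1 n lam ?d * (real lam * q0 / (1 + real lam * q0)) \<le> w1 n lam ?d * measure_pmf.prob (ea_step n lam x) {y. onemax x + 1 \<le> onemax y}"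
    using B P w1_nonneg by (intro mult_left_mono) auto
  then show ?thesis using eq by simp
qed

lemma EAk:
  assumes n: "2 \<le> n" and lam: "1 \<le> lam" and len: "length x = n"
    and k: "1 \<le> k" "k \<le> n - onemax x" "n \<le> k * (n - onemax x)" and big: "exp 2 * real k ^ (2 * k) \<le> real lam"
  shows "real lam \<le> 2 * real lam / real k * real k * measure_pmf.prob (ea_step n lam x) {y. onemax x + k \<le> onemax y}"
proof -
  let ?d = "n - onemax x"
  have cz: "card (zeros x) = ?d" using card_zeros[of x] len by simp
  define q0 where "q0 = (1 / real k ^ 2) ^ k * exp (-2)"
  have kn: "k \<le> n" using k by simp
  have Q: "real (card (zeros x) choose k) * (1 / real n) ^ k * (1 - 1 / real n) ^ (n - k)
      \<le> measure_pmf.prob (bitwise_mut (1 / real n) x) {z. onemax x + k \<le> onemax z}"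
    by (rule prob_mut_gain) (use len n k cz in auto)
  have C1: "(real ?d / real k) ^ k \<le> real (?d choose k)" by (rule binomial_ge_n_over_k_pow_k) (use k in auto)
  have C2: "(1 / real k ^ 2) ^ k \<le> (real ?d / real k) ^ k * (1 / real n) ^ k"
  proof -
    have "1 / real k ^ 2 \<le> real ?d / real k * (1 / real n)"
    proof -
      have "real n \<le> real k * real ?d" using k(3) by (metis of_nat_le_iff of_nat_mult)
      then show ?thesis using k n by (simp add: field_simps power2_eq_square)
    qed
    then have "(1 / real k ^ 2) ^ k \<le> (real ?d / real k * (1 / real n)) ^ k" by (rule power_mono) simp
    then show ?thesis by (metis power_mult_distrib)
  qed
  have "q0 \<le> real (card (zeros x) choose k) * (1 / real n) ^ k * (1 - 1 / real n) ^ (n - k)"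
  proof -
    have "q0 \<le> (real ?d / real k) ^ k * (1 / real n) ^ k * exp (-2)"
      unfolding q0_def using C2 by (simp add: mult_right_mono)
    also have "\<dots> \<le> real (?d choose k) * (1 / real n) ^ k * exp (-2)"
      using C1 by (intro mult_right_mono) auto
    also have "\<dots> \<le> real (?d choose k) * (1 / real n) ^ k * (1 - 1 / real n) ^ (n - k)"
      using pow_n_minus_k[OF n kn] by (intro mult_left_mono) auto
    finally show ?thesis using cz by simp
  qed
  then have qQ: "q0 \<le> measure_pmf.prob (bitwise_mut (1 / real n) x) {z. onemax x + k \<le> onemax z}" using Q by linarith
  have q00: "0 \<le> q0" by (simp add: q0_def)
  have q01: "q0 \<le> 1"
  proof -
    have "(1 / real k ^ 2) ^ k \<le> 1" using k by (intro power_le_one) auto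
    moreover have "exp (-2::real) \<le> 1" by simp
    ultimately show ?thesis unfolding q0_def by (simp add: mult_le_one)
  qed
  have P: "1 - (1 - q0) ^ lam \<le> measure_pmf.prob (ea_step n lam x) {y. onemax x + k \<le> onemax y}"
    by (rule ea_step_gain[OF lam qQ q00])
  have B: "real lam * q0 / (1 + real lam * q0) \<le> 1 - (1 - q0) ^ lam" by (rule one_minus_pow_ge[OF q00 q01])
  have lq: "1 \<le> real lam * q0"
  proof -
    have a: "real k ^ (2 * k) = (real k ^ 2) ^ k" by (simp add: power_mult)
    have b: "(real k ^ 2) ^ k * (1 / real k ^ 2) ^ k = 1" using k by (simp add: power_mult_distrib[symmetric])
    have "real k ^ (2 * k) * q0 = exp (-2)" unfolding q0_def a by (simp add: mult.assoc[symmetric] b)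
    then have "exp 2 * real k ^ (2 * k) * q0 = 1" by (simp add: exp_minus field_simps)
    then show ?thesis using big q00 by (metis mult_right_mono)
  qed
  have h0: "1 / (1 + 1) \<le> real lam * q0 / (1 + real lam * q0)" by (rule frac_mono[OF _ lq]) simp
  have h: "1 / 2 \<le> real lam * q0 / (1 + real lam * q0)" using h0 by simp
  have half: "1 / 2 \<le> measure_pmf.prob (ea_step n lam x) {y. onemax x + k \<le> onemax y}" using B P h by linarith
  have kpos: "0 < real k" using k by simp
  have "2 * real lam / real k * real k * measure_pmf.prob (ea_step n lam x) {y. onemax x + k \<le> onemax y}
     = 2 * real lam * measure_pmf.prob (ea_step n lam x) {y. onemax x + k \<le> onemax y}" using kpos by simp
  moreover have "real lam \<le> 2 * real lam * measure_pmf.prob (ea_step n lam x) {y. onemax x + k \<le> onemax y}"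
  proof -
    have "real lam * 1 \<le> real lam * (2 * measure_pmf.prob (ea_step n lam x) {y. onemax x + k \<le> onemax y})"
      using half by (intro mult_left_mono) auto
    then show ?thesis by (simp add: ac_simps)
  qed
  ultimately show ?thesis using kpos by simp
qed

lemma HEA_w:
  assumes n: "2 \<le> n" and lam: "1 \<le> lam" and mb: "mb \<longrightarrow> 1 \<le> k \<and> exp 2 * real k ^ (2 * k) \<le> real lam \<and> k * k \<le> n"
    and len: "length x = n" and dD: "D < n - onemax x"
  shows "\<exists>k'\<ge>1. real lam \<le> wE n lam D mb k (n - onemax x) * real k' * measure_pmf.prob (ea_step n lam x) {y. onemax x + k' \<le> onemax y}"
proof -
  let ?d = "n - onemax x"
  have wE: "wE n lam D mb k ?d = wp n lam mb k ?d" using dD by (simp add: wE_def max_absorb1)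
  have d0: "0 < ?d" using dD by simp
  have e1: "real lam \<le> w1 n lam ?d * real 1 * measure_pmf.prob (ea_step n lam x) {y. onemax x + 1 \<le> onemax y}"
    by (rule EA1[OF n lam len d0])
  show ?thesis
  proof (cases "mb \<and> n \<le> k * ?d")
    case True
    have k: "1 \<le> k" "exp 2 * real k ^ (2 * k) \<le> real lam" "k * k \<le> n" using mb True by auto
    have "k * k \<le> k * ?d" using k(3) True le_trans by blast
    then have kd: "k \<le> ?d" using k(1) by simp
    show ?thesis
    proof (cases "w1 n lam ?d \<le> 2 * real lam / real k")
      case True2: True
      then have "wE n lam D mb k ?d = w1 n lam ?d" using wE True by (simp add: wp_def)
      then show ?thesis using e1 by (intro exI[of _ 1]) simp
    next
      case False2: False
      then have "wE n lam D mb k ?d = 2 * real lam / real k" using wE True by (simp add: wp_def)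
      moreover have "real lam \<le> 2 * real lam / real k * real k * measure_pmf.prob (ea_step n lam x) {y. onemax x + k \<le> onemax y}"
        by (rule EAk[OF n lam len k(1) kd _ k(2)]) (use True in simp)
      ultimately show ?thesis using k(1) by (intro exI[of _ k]) simp
    qed
  next
    case False
    have "wp n lam mb k ?d = w1 n lam ?d" unfolding wp_def using False by (rule if_not_P)
    then have "wE n lam D mb k ?d = w1 n lam ?d" using wE by simp
    then show ?thesis using e1 by (intro exI[of _ 1]) simp
  qed
qed

lemma sum_vG:
  assumes "0 < lam"
  shows "Wsum (vG n lam) D \<le> 4 / cX * (real D * real lam + 2 * real n / real lam * (1 + ln (real D)))"
proof -
  have eq: "Wsum (vG n lam) D = 4 / cX * (\<Sum>j\<in>{1..D}. real lam + 2 * real n / real lam * (1 / real j))"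
    unfolding Wsum_def vG_def by (simp add: sum_distrib_left field_simps)
  have "(\<Sum>j\<in>{1..D}. real lam + 2 * real n / real lam * (1 / real j))
      = real D * real lam + 2 * real n / real lam * (\<Sum>j\<in>{1..D}. 1 / real j)"
    by (simp add: sum.distrib sum_distrib_left)
  also have "\<dots> \<le> real D * real lam + 2 * real n / real lam * (1 + ln (real D))"
    using harm_full[of D] assms by (intro add_left_mono mult_left_mono) auto
  finally have S: "(\<Sum>j\<in>{1..D}. real lam + 2 * real n / real lam * (1 / real j)) \<le> real D * real lam + 2 * real n / real lam * (1 + ln (real D))" .
  show ?thesis unfolding eq by (rule mult_left_mono[OF S]) (use cX_pos in auto)
qed

lemma card_small_j:
  assumes "1 \<le> k"
  shows "real (card {j\<in>{1..n}. k * j < n}) \<le> real n / real k"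
proof -
  have "{j\<in>{1..n}. k * j < n} \<subseteq> {1..n div k}"
  proof
    fix j assume "j \<in> {j\<in>{1..n}. k * j < n}"
    then have "1 \<le> j" "k * j \<le> n" by auto
    then show "j \<in> {1..n div k}" using assms by (auto simp: less_eq_div_iff_mult_less_eq mult.commute)
  qed
  then have "card {j\<in>{1..n}. k * j < n} \<le> n div k" using card_mono[of "{1..n div k}"] by force
  then have "real (card {j\<in>{1..n}. k * j < n}) \<le> real (n div k)" by simp
  also have "\<dots> \<le> real n / real k" by (rule of_nat_div_le_of_nat)
  finally show ?thesis .
qed

lemma sum_wE:
  assumes D: "1 \<le> D" "D \<le> n" and mb: "mb \<longrightarrow> 1 \<le> k"
  shows "Wsum (wE n lam D mb k) n \<le> real lam * real D + exp 2 * real n + exp 2 * real n * (ln (real n) - ln (real D))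
     + (if mb then 3 * real n * real lam / real k else real n * real lam)"
proof -
  let ?w = "wE n lam D mb k"
  let ?g = "\<lambda>j. if mb \<and> n \<le> k * j then 2 * real lam / real k else real lam"
  have split: "{1..n} = {1..D} \<union> {Suc D..n}" using D by auto
  have "Wsum ?w n = (\<Sum>j\<in>{1..D}. ?w j) + (\<Sum>j\<in>{Suc D..n}. ?w j)"
    unfolding Wsum_def split by (rule sum.union_disjoint) auto
  moreover have "(\<Sum>j\<in>{1..D}. ?w j) \<le> real lam * real D + exp 2 * real n"
  proof -
    have "?w j = wp n lam mb k (Suc D)" if "j \<in> {1..D}" for j using that by (simp add: wE_def max_absorb2)
    then have "(\<Sum>j\<in>{1..D}. ?w j) = real D * wp n lam mb k (Suc D)" by simp
    also have "wp n lam mb k (Suc D) \<le> w1 n lam (Suc D)" by (simp add: wp_def)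
    then have "real D * wp n lam mb k (Suc D) \<le> real D * w1 n lam (Suc D)" by (intro mult_left_mono) auto
    also have "real D * w1 n lam (Suc D) = real lam * real D + exp 2 * real n * (real D / real (Suc D))"
      by (simp add: w1_def field_simps)
    also have "\<dots> \<le> real lam * real D + exp 2 * real n"
    proof -
      have "real D / real (Suc D) \<le> 1" by simp
      then have "exp 2 * real n * (real D / real (Suc D)) \<le> exp 2 * real n * 1" by (intro mult_left_mono) auto
      then show ?thesis by simp
    qed
    finally show ?thesis .
  qed
  moreover have "(\<Sum>j\<in>{Suc D..n}. ?w j) \<le> (\<Sum>j\<in>{Suc D..n}. exp 2 * real n * (1 / real j) + ?g j)"
  proof (rule sum_mono)
    fix j assume j: "j \<in> {Suc D..n}"
    then have "?w j = wp n lam mb k j" by (simp add: wE_def max_absorb1)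
    moreover have "wp n lam mb k j \<le> exp 2 * real n * (1 / real j) + ?g j"
    proof (cases "mb \<and> n \<le> k * j")
      case True
      have a: "wp n lam mb k j \<le> 2 * real lam / real k" using True by (simp add: wp_def)
      have nn: "0 \<le> exp 2 * real n * (1 / real j)" by simp
      have g: "?g j = 2 * real lam / real k" using True by simp
      show ?thesis unfolding g using a nn by linarith
    next
      case False
      have a: "wp n lam mb k j = w1 n lam j" unfolding wp_def using False by (rule if_not_P)
      have g: "?g j = real lam" using False by (rule if_not_P)
      show ?thesis unfolding a g by (simp add: w1_def)
    qed
    ultimately show "?w j \<le> exp 2 * real n * (1 / real j) + ?g j" by simp
  qed
  moreover have "(\<Sum>j\<in>{Suc D..n}. exp 2 * real n * (1 / real j) + ?g j)
      = exp 2 * real n * (\<Sum>j\<in>{Suc D..n}. 1 / real j) + (\<Sum>j\<in>{Suc D..n}. ?g j)"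
    by (simp add: sum.distrib sum_distrib_left)
  moreover have "exp 2 * real n * (\<Sum>j\<in>{Suc D..n}. 1 / real j) \<le> exp 2 * real n * (ln (real n) - ln (real D))"
    using harm_tail[OF D] by (intro mult_left_mono) auto
  moreover have "(\<Sum>j\<in>{Suc D..n}. ?g j) \<le> (\<Sum>j\<in>{1..n}. ?g j)"
    by (rule sum_mono2) auto
  moreover have "(\<Sum>j\<in>{1..n}. ?g j) \<le> (if mb then 3 * real n * real lam / real k else real n * real lam)"
  proof (cases mb)
    case False then show ?thesis by simp
  next
    case True
    then have k: "1 \<le> k" using mb by simp
    have "(\<Sum>j\<in>{1..n}. ?g j) \<le> (\<Sum>j\<in>{1..n}. 2 * real lam / real k + real lam * (if k * j < n then 1 else 0))"
      by (rule sum_mono) (use True in auto)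
    also have "\<dots> = real n * (2 * real lam / real k) + real lam * real (card {j\<in>{1..n}. k * j < n})"
    proof -
      have cs: "card ({Suc 0..n} \<inter> {j. k * j < n}) = card {j. Suc 0 \<le> j \<and> j \<le> n \<and> k * j < n}"
        by (rule arg_cong[where f=card]) auto
      show ?thesis by (simp add: sum.distrib sum_distrib_left[symmetric] sum.If_cases cs)
    qed
    also have "real lam * real (card {j\<in>{1..n}. k * j < n}) \<le> real lam * (real n / real k)"
      using card_small_j[OF k, of n] by (intro mult_left_mono) auto
    finally show ?thesis using True by (simp add: field_simps)
  qed
  ultimately show ?thesis by linarith
qed

lemma final_numeric:
  fixes n l1 D l2 k :: nat and mb :: bool
  assumes n: "2 \<le> n" and l1: "1 \<le> l1" and l2: "8 \<le> l2" "l2 \<le> n" and D: "1 \<le> D" "D \<le> n"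
    and mb: "mb \<longrightarrow> 1 \<le> k \<and> exp 2 * real k ^ (2 * k) \<le> real l1 \<and> k * k \<le> n"
  shows "expected_evals n l1 D l2 \<le> ennreal (1 + 4 / cX * (real D * real l2 + 2 * real n / real l2 * (1 + ln (real D)))
     + (real l1 * real D + exp 2 * real n + exp 2 * real n * (ln (real n) - ln (real D))
     + (if mb then 3 * real n * real l1 / real k else real n * real l1)))"
proof -
  let ?w = "wE n l1 D mb k"
  let ?v = "vG n l2"
  have "expected_evals n l1 D l2 \<le> ennreal (1 + (Wsum ?v D + Wsum ?w n))"
  proof (rule expected_evals_bound)
    show "1 \<le> l1" "1 \<le> l2" "l2 \<le> n" using l1 l2 by auto
    show "\<And>j. 0 \<le> ?w j" by (rule wE_nonneg)
    show "\<And>i j. i \<le> j \<Longrightarrow> ?w j \<le> ?w i" by (rule wE_mono)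
    show "\<And>j. 0 \<le> ?v j" by (rule vG_nonneg)
    show "\<exists>k'\<ge>1. real l1 \<le> ?w (n - onemax x) * real k' * measure_pmf.prob (ea_step n l1 x) {y. onemax x + k' \<le> onemax y}"
      if "length x = n" "D < n - onemax x" for x
      by (rule HEA_w[OF n l1 mb that])
    show "real (2 * l2) \<le> ?v (n - onemax x) * measure_pmf.prob (ga_step n l2 x) {y. onemax x < onemax y}"
      if "length x = n" "0 < n - onemax x" "n - onemax x \<le> D" for x
      by (rule HGA_v[OF l2 that(1,2)])
  qed
  also have "\<dots> \<le> ennreal (1 + 4 / cX * (real D * real l2 + 2 * real n / real l2 * (1 + ln (real D)))
     + (real l1 * real D + exp 2 * real n + exp 2 * real n * (ln (real n) - ln (real D))
     + (if mb then 3 * real n * real l1 / real k else real n * real l1)))"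
  proof (rule ennreal_leI)
    have "Wsum ?v D \<le> 4 / cX * (real D * real l2 + 2 * real n / real l2 * (1 + ln (real D)))"
      by (rule sum_vG) (use l2 in simp)
    moreover have "Wsum ?w n \<le> real l1 * real D + exp 2 * real n + exp 2 * real n * (ln (real n) - ln (real D))
     + (if mb then 3 * real n * real l1 / real k else real n * real l1)"
      by (rule sum_wE[OF D]) (use mb in simp)
    ultimately show "1 + (Wsum ?v D + Wsum ?w n) \<le> 1 + 4 / cX * (real D * real l2 + 2 * real n / real l2 * (1 + ln (real D)))
     + (real l1 * real D + exp 2 * real n + exp 2 * real n * (ln (real n) - ln (real D))
     + (if mb then 3 * real n * real l1 / real k else real n * real l1))" by linarith
  qed
  finally show ?thesis .
qed

lemma mb_facts:
  fixes l1 :: nat and L2 L3 L4 B K1 :: real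
  assumes L: "1 \<le> L2" "1 \<le> L3" "1 \<le> L4" "L4 = ln L3"
    and B: "8 * K1 \<le> B" "0 < K1" "8 \<le> B"
    and l1: "real l1 \<le> K1 * (L2 * L3 / L4)" and big: "B * L2 < real l1"
    and e3: "exp (2 + L3 / 4) \<le> L2" and e4: "L3 ^ 2 \<le> real n"
  defines "k \<equiv> nat \<lfloor>real l1 / (B * L2)\<rfloor>"
  shows "1 \<le> k \<and> exp 2 * real k ^ (2 * k) \<le> real l1 \<and> k * k \<le> n \<and> real l1 / real k \<le> 2 * B * L2"
proof -
  define x where "x = real l1 / (B * L2)"
  have BL: "0 < B * L2" using B L by simp
  have x1: "1 < x" using big BL by (simp add: x_def field_simps)
  have fl: "1 \<le> \<lfloor>x\<rfloor>" using x1 by simp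
  have rk: "real k = of_int \<lfloor>x\<rfloor>" using fl by (simp add: k_def x_def)
  have "(1::real) \<le> of_int \<lfloor>x\<rfloor>" using fl by linarith
  then have rk1: "1 \<le> real k" using rk by simp
  then have k1: "1 \<le> k" by simp
  have kx: "real k \<le> x" using rk by simp
  have x2k: "x \<le> 2 * real k" using rk real_of_int_floor_add_one_gt[of x] rk1 by linarith
  define M where "M = L3 / (8 * L4)"
  have xM: "x \<le> M"
  proof -
    have "x \<le> K1 * (L2 * L3 / L4) / (B * L2)" unfolding x_def by (rule divide_right_mono[OF l1]) (use BL in simp)
    also have "\<dots> = (K1 / B) * (L3 / L4)" using L B by (simp add: field_simps)
    also have "\<dots> \<le> (1 / 8) * (L3 / L4)"
      using B L by (intro mult_right_mono) (auto simp: field_simps)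
    finally show ?thesis by (simp add: M_def field_simps)
  qed
  have kM: "real k \<le> M" using kx xM by simp
  have L32: "2 \<le> L3" using ln_le_minus_one[of L3] L by simp
  have "L3 / (8 * L4) \<le> L3 / 1" by (rule divide_left_mono) (use L L32 in auto)
  then have ML3: "M \<le> L3" by (simp add: M_def)
  have kL3: "real k \<le> L3" using kM ML3 by simp
  have kk: "k * k \<le> n"
  proof -
    have "real k * real k \<le> L3 * L3" using kL3 k1 by (intro mult_mono) auto
    then have "real (k * k) \<le> real n" using e4 by (simp add: power2_eq_square)
    then show ?thesis by (simp only: of_nat_le_iff)
  qed
  have kpos: "0 < real k" using k1 by simp
  have lnk: "ln (real k) \<le> L4"
  proof -
    have "ln (real k) \<le> ln L3" using kL3 kpos by simp
    then show ?thesis using L by simp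
  qed
  have lnk0: "0 \<le> ln (real k)" using k1 by simp
  have "real k * ln (real k) \<le> M * L4" by (rule mult_mono[OF kM lnk]) (use kpos lnk0 L in \<open>auto simp: M_def\<close>)
  also have "M * L4 = L3 / 8" using L L32 by (simp add: M_def field_simps)
  finally have kl: "2 * real k * ln (real k) \<le> L3 / 4" by simp
  have "real k ^ (2 * k) = exp (real (2 * k) * ln (real k))"
    using kpos by (simp add: powr_realpow[symmetric] powr_def)
  then have "exp 2 * real k ^ (2 * k) = exp (2 + 2 * real k * ln (real k))" by (simp add: exp_add)
  also have "\<dots> \<le> exp (2 + L3 / 4)" using kl by simp
  also have "\<dots> \<le> L2" by (rule e3)
  also have "\<dots> \<le> B * L2" using B L by simp
  also have "\<dots> < real l1" by (rule big)
  finally have ek: "exp 2 * real k ^ (2 * k) \<le> real l1" by simp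
  have "real l1 = x * (B * L2)" using B L unfolding x_def by (simp add: field_simps)
  also have "\<dots> \<le> 2 * real k * (B * L2)" using x2k BL by (intro mult_right_mono) auto
  finally have "real l1 / real k \<le> 2 * B * L2" using kpos by (simp add: field_simps)
  then show ?thesis using k1 ek kk by simp
qed

lemma pointwise:
  fixes n l1 D l2 :: nat and K1 K2 c3 c5 K6 B :: real
  assumes n2: "2 \<le> n"
    and L: "1 \<le> ln (real n)" "1 \<le> ln (ln (real n))" "1 \<le> ln (ln (ln (real n)))" "1 \<le> ln (ln (ln (ln (real n))))"
    and K1: "0 < K1" and B: "B = 8 * max K1 1"
    and l1: "1 \<le> l1" "real l1 \<le> K1 * (ln (ln (real n)) * ln (ln (ln (real n))) / ln (ln (ln (ln (real n)))))"
    and c3: "0 < c3" "real n / ln (real n) powr c3 \<le> real D"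
    and K2: "0 < K2" "real D \<le> K2 * (real n * (ln (ln (real n)))\<^sup>2 / ln (real n))"
    and c5: "0 < c5" "c5 * (ln (real n) / ln (ln (real n))) \<le> real l2"
    and K6: "0 < K6" "real l2 \<le> K6 * (real n / real D * ln (ln (real n)))"
    and l2n: "l2 \<le> n"
    and e1: "K2 * ((ln (ln (real n)))\<^sup>2 / ln (real n)) \<le> 1"
    and e2: "ln (ln (real n)) * ln (ln (ln (real n))) / ln (ln (ln (ln (real n)))) * ln (ln (real n)) / ln (real n) \<le> 1 / (K1 * K2)"
    and e3: "exp (2 + ln (ln (ln (real n))) / 4) \<le> ln (ln (real n))"
    and e4: "(ln (ln (ln (real n))))\<^sup>2 \<le> real n"
    and e5: "8 \<le> c5 * (ln (real n) / ln (ln (real n)))"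
    and e6: "1 \<le> real n / ln (real n) powr c3"
  shows "expected_evals n l1 D l2 \<le> ennreal ((1 + 4 / cX * (K6 + 4 / c5) + 1 + exp 2 + exp 2 * c3 + 6 * B) * real n * ln (ln (real n)))"
proof -
  define N where "N = real n"
  define L1 where "L1 = ln N"
  define L2 where "L2 = ln L1"
  define L3 where "L3 = ln L2"
  define L4 where "L4 = ln L3"
  have LL: "1 \<le> L1" "1 \<le> L2" "1 \<le> L3" "1 \<le> L4" using L by (simp_all add: L1_def L2_def L3_def L4_def N_def)
  have N2: "2 \<le> N" using n2 by (simp add: N_def)
  have D1r: "1 \<le> real D" using e6 c3(2) by linarith
  then have D1: "1 \<le> D" by simp
  have Dn: "D \<le> n"
  proof -
    have "real D \<le> N * (K2 * (L2\<^sup>2 / L1))" using K2(2) by (simp add: N_def L1_def L2_def field_simps)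
    also have "\<dots> \<le> N * 1" using e1 N2 by (intro mult_left_mono) (auto simp: L1_def L2_def N_def)
    finally show ?thesis by (simp add: N_def)
  qed
  have l28: "8 \<le> l2" using e5 c5(2) by linarith
  define mb where "mb = (B * L2 < real l1)"
  define k where "k = nat \<lfloor>real l1 / (B * L2)\<rfloor>"
  have Bge: "8 * K1 \<le> B" "8 \<le> B" using B by auto
  have mbf: "mb \<longrightarrow> 1 \<le> k \<and> exp 2 * real k ^ (2 * k) \<le> real l1 \<and> k * k \<le> n \<and> real l1 / real k \<le> 2 * B * L2"
  proof
    assume mb
    show "1 \<le> k \<and> exp 2 * real k ^ (2 * k) \<le> real l1 \<and> k * k \<le> n \<and> real l1 / real k \<le> 2 * B * L2"
      unfolding k_def
      by (rule mb_facts[OF LL(2,3,4) _ Bge(1) K1 Bge(2)])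
         (use l1(2) \<open>mb\<close> e3 e4 in \<open>auto simp: mb_def L1_def L2_def L3_def L4_def N_def\<close>)
  qed
  have FN: "expected_evals n l1 D l2 \<le> ennreal (1 + 4 / cX * (real D * real l2 + 2 * real n / real l2 * (1 + ln (real D)))
     + (real l1 * real D + exp 2 * real n + exp 2 * real n * (ln (real n) - ln (real D))
     + (if mb then 3 * real n * real l1 / real k else real n * real l1)))"
    by (rule final_numeric[OF n2 l1(1) l28 l2n D1 Dn]) (use mbf in auto)
  have Dpos: "0 < real D" using D1r by simp
  have l2pos: "0 < real l2" using l28 by simp
  have NL2: "0 \<le> N * L2" using N2 LL by simp
  have "1 * 1 \<le> N * L2" by (rule mult_mono) (use N2 LL in auto)
  then have T0: "1 \<le> N * L2" by simp
  have T1: "real D * real l2 \<le> K6 * (N * L2)"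
  proof -
    have "real D * real l2 \<le> real D * (K6 * (real n / real D * ln (ln (real n))))"
      using K6(2) Dpos by (intro mult_left_mono) auto
    also have "\<dots> = K6 * (N * L2)" using Dpos by (simp add: N_def L1_def L2_def field_simps)
    finally show ?thesis .
  qed
  have T2: "2 * real n / real l2 * (1 + ln (real D)) \<le> 4 / c5 * (N * L2)"
  proof -
    have "ln (real D) \<le> L1" using Dn Dpos by (simp add: L1_def N_def)
    then have a: "1 + ln (real D) \<le> 2 * L1" using LL by simp
    have a0: "0 \<le> 1 + ln (real D)" using D1r by simp
    have b: "1 / real l2 \<le> L2 / (c5 * L1)"
    proof -
      have h1: "c5 * (L1 / L2) \<le> real l2" using c5(2) by (simp add: L1_def L2_def N_def)
      have h2: "0 < c5 * (L1 / L2)" using c5 LL by simp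
      have "1 / real l2 \<le> 1 / (c5 * (L1 / L2))"
        by (rule divide_left_mono[OF h1]) (use h2 l28 in \<open>auto intro!: mult_pos_pos simp del: times_divide_eq_right\<close>)
      then show ?thesis using LL c5 by (simp add: field_simps)
    qed
    have "2 * real n / real l2 * (1 + ln (real D)) = 2 * N * (1 / real l2) * (1 + ln (real D))" by (simp add: N_def)
    also have "\<dots> \<le> 2 * N * (L2 / (c5 * L1)) * (2 * L1)"
      using a a0 b N2 LL c5(1) by (intro mult_mono) auto
    also have "\<dots> = 4 / c5 * (N * L2)" using LL c5 by (simp add: field_simps)
    finally show ?thesis .
  qed
  have T12: "4 / cX * (real D * real l2 + 2 * real n / real l2 * (1 + ln (real D))) \<le> 4 / cX * (K6 + 4 / c5) * (N * L2)"
  proof -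
    have "real D * real l2 + 2 * real n / real l2 * (1 + ln (real D)) \<le> (K6 + 4 / c5) * (N * L2)"
      using T1 T2 by (simp add: algebra_simps)
    then have "4 / cX * (real D * real l2 + 2 * real n / real l2 * (1 + ln (real D))) \<le> 4 / cX * ((K6 + 4 / c5) * (N * L2))"
      by (rule mult_left_mono) (use cX_pos in simp)
    then show ?thesis by (simp only: mult.assoc)
  qed
  have T3: "real l1 * real D \<le> N * L2"
  proof -
    have "real l1 * real D \<le> (K1 * (L2 * L3 / L4)) * (K2 * (N * L2\<^sup>2 / L1))"
      using l1(2) K2(2) D1r by (intro mult_mono) (auto simp: N_def L1_def L2_def L3_def L4_def)
    also have "\<dots> = (K1 * K2) * (N * L2) * (L2 * L3 / L4 * L2 / L1)" by (simp add: power2_eq_square field_simps)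
    also have "\<dots> \<le> (K1 * K2) * (N * L2) * (1 / (K1 * K2))"
      using e2 K1 K2 NL2 by (intro mult_left_mono) (auto simp: N_def L1_def L2_def L3_def L4_def)
    also have "\<dots> = N * L2" using K1 K2 by simp
    finally show ?thesis .
  qed
  have T4: "exp 2 * real n \<le> exp 2 * (N * L2)"
    using LL N2 by (simp add: N_def)
  have T5: "exp 2 * real n * (ln (real n) - ln (real D)) \<le> exp 2 * c3 * (N * L2)"
  proof -
    have pos: "0 < N / L1 powr c3" using N2 LL by simp
    have "ln (N / L1 powr c3) \<le> ln (real D)" using c3(2) pos by (simp add: N_def L1_def)
    moreover have "ln (N / L1 powr c3) = L1 - c3 * L2" using N2 LL by (simp add: ln_div L1_def L2_def)
    ultimately have "ln (real n) - ln (real D) \<le> c3 * L2" by (simp add: N_def L1_def)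
    then have "exp 2 * N * (ln (real n) - ln (real D)) \<le> exp 2 * N * (c3 * L2)" using N2 by (intro mult_left_mono) auto
    then show ?thesis by (simp add: N_def algebra_simps)
  qed
  have T6: "(if mb then 3 * real n * real l1 / real k else real n * real l1) \<le> 6 * B * (N * L2)"
  proof (cases mb)
    case True
    then have "real l1 / real k \<le> 2 * B * L2" using mbf by simp
    then have "3 * N * (real l1 / real k) \<le> 3 * N * (2 * B * L2)" using N2 by (intro mult_left_mono) auto
    then show ?thesis using True by (simp add: N_def algebra_simps)
  next
    case False
    then have "real l1 \<le> B * L2" by (simp add: mb_def)
    then have "N * real l1 \<le> N * (B * L2)" using N2 by (intro mult_left_mono) auto
    moreover have "N * (B * L2) \<le> 6 * B * (N * L2)" using Bge NL2 by (simp add: algebra_simps)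
    ultimately show ?thesis using False by (simp add: N_def algebra_simps)
  qed
  have "1 + 4 / cX * (real D * real l2 + 2 * real n / real l2 * (1 + ln (real D)))
     + (real l1 * real D + exp 2 * real n + exp 2 * real n * (ln (real n) - ln (real D))
     + (if mb then 3 * real n * real l1 / real k else real n * real l1))
     \<le> (1 + 4 / cX * (K6 + 4 / c5) + 1 + exp 2 + exp 2 * c3 + 6 * B) * (N * L2)"
  proof -
    have R: "(1 + 4 / cX * (K6 + 4 / c5) + 1 + exp 2 + exp 2 * c3 + 6 * B) * (N * L2)
      = N * L2 + 4 / cX * (K6 + 4 / c5) * (N * L2) + N * L2 + exp 2 * (N * L2) + exp 2 * c3 * (N * L2) + 6 * B * (N * L2)"
      by (simp add: algebra_simps)
    show ?thesis using T0 T12 T3 T4 T5 T6 R by linarith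
  qed
  then have "1 + 4 / cX * (real D * real l2 + 2 * real n / real l2 * (1 + ln (real D)))
     + (real l1 * real D + exp 2 * real n + exp 2 * real n * (ln (real n) - ln (real D))
     + (if mb then 3 * real n * real l1 / real k else real n * real l1))
     \<le> (1 + 4 / cX * (K6 + 4 / c5) + 1 + exp 2 + exp 2 * c3 + 6 * B) * real n * ln (ln (real n))"
    by (simp add: N_def L1_def L2_def mult.assoc)
  then show ?thesis using FN by (rule order_trans[OF _ ennreal_leI, rotated])
qed

lemma asym_t1: "((\<lambda>n::nat. ln (ln (real n)) ^ 2 / ln (real n)) \<longlongrightarrow> 0) at_top"
  by real_asymp

lemma asym_t2: "((\<lambda>n::nat. ln (ln (real n)) * ln (ln (ln (real n))) / ln (ln (ln (ln (real n)))) * ln (ln (real n)) / ln (real n)) \<longlongrightarrow> 0) at_top"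
  by real_asymp

lemma asym_t3: "c > 0 \<Longrightarrow> eventually (\<lambda>n::nat. 1 \<le> real n / ln (real n) powr c) at_top"
  by real_asymp

lemma asym_t4: "eventually (\<lambda>n::nat. 2 \<le> n \<and> 1 \<le> ln (real n) \<and> 1 \<le> ln (ln (real n)) \<and> 1 \<le> ln (ln (ln (real n))) \<and> 1 \<le> ln (ln (ln (ln (real n))))) at_top"
  by (intro eventually_conj; real_asymp)

lemma asym_t5: "eventually (\<lambda>n::nat. exp (2 + ln (ln (ln (real n))) / 4) \<le> ln (ln (real n))) at_top"
  by real_asymp

lemma asym_t6: "eventually (\<lambda>n::nat. (ln (ln (ln (real n))))\<^sup>2 \<le> real n) at_top"
  by real_asymp

lemma asym_t7: "c > 0 \<Longrightarrow> eventually (\<lambda>n::nat. 8 \<le> c * (ln (real n) / ln (ln (real n)))) at_top"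
  by real_asymp

theorem corollary4p3:
  fixes lam1 D lam2 :: "nat \<Rightarrow> nat"
  assumes "\<forall>\<^sub>F n in at_top. 1 \<le> lam1 n"
    and "(\<lambda>n. real (lam1 n)) \<in>
           O(\<lambda>n. ln (ln (real n)) * ln (ln (ln (real n))) / ln (ln (ln (ln (real n)))))"
    and "\<exists>c>0. \<forall>\<^sub>F n in at_top. real n / ln (real n) powr c \<le> real (D n)"
    and "(\<lambda>n. real (D n)) \<in> O(\<lambda>n. real n * (ln (ln (real n)))\<^sup>2 / ln (real n))"
    and "(\<lambda>n. real (lam2 n)) \<in> \<Omega>(\<lambda>n. ln (real n) / ln (ln (real n)))"
    and "(\<lambda>n. real (lam2 n)) \<in> O(\<lambda>n. real n / real (D n) * ln (ln (real n)))"
    and "\<forall>\<^sub>F n in at_top. 1 \<le> lam2 n \<and> lam2 n \<le> n"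
  shows "\<exists>C. \<forall>\<^sub>F n in at_top.
           expected_evals n (lam1 n) (D n) (lam2 n) \<le> ennreal (C * real n * ln (ln (real n)))"
proof -
  obtain K1 where K1: "K1 > 0" "eventually (\<lambda>n. norm (real (lam1 n)) \<le> K1 * norm (ln (ln (real n)) * ln (ln (ln (real n))) / ln (ln (ln (ln (real n)))))) at_top"
    using assms(2) by (elim landau_o.bigE) auto
  obtain c3 where c3: "c3 > 0" "eventually (\<lambda>n. real n / ln (real n) powr c3 \<le> real (D n)) at_top"
    using assms(3) by blast
  obtain K2 where K2: "K2 > 0" "eventually (\<lambda>n. norm (real (D n)) \<le> K2 * norm (real n * (ln (ln (real n)))\<^sup>2 / ln (real n))) at_top"
    using assms(4) by (elim landau_o.bigE) auto
  obtain c5 where c5: "c5 > 0" "eventually (\<lambda>n. norm (real (lam2 n)) \<ge> c5 * norm (ln (real n) / ln (ln (real n)))) at_top"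
    using assms(5) by (elim landau_omega.bigE) auto
  obtain K6 where K6: "K6 > 0" "eventually (\<lambda>n. norm (real (lam2 n)) \<le> K6 * norm (real n / real (D n) * ln (ln (real n)))) at_top"
    using assms(6) by (elim landau_o.bigE) auto
  define B where "B = 8 * max K1 1"
  define C where "C = 1 + 4 / cX * (K6 + 4 / c5) + 1 + exp 2 + exp 2 * c3 + 6 * B"
  have e1: "eventually (\<lambda>n::nat. K2 * ((ln (ln (real n)))\<^sup>2 / ln (real n)) \<le> 1) at_top"
  proof -
    have "eventually (\<lambda>n::nat. ln (ln (real n)) ^ 2 / ln (real n) < 1 / K2) at_top"
      by (rule order_tendstoD(2)[OF asym_t1]) (use K2 in simp)
    then show ?thesis
      by eventually_elim (use K2 in \<open>simp add: field_simps\<close>)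
  qed
  have e2: "eventually (\<lambda>n::nat. ln (ln (real n)) * ln (ln (ln (real n))) / ln (ln (ln (ln (real n)))) * ln (ln (real n)) / ln (real n) \<le> 1 / (K1 * K2)) at_top"
  proof -
    have "eventually (\<lambda>n::nat. ln (ln (real n)) * ln (ln (ln (real n))) / ln (ln (ln (ln (real n)))) * ln (ln (real n)) / ln (real n) < 1 / (K1 * K2)) at_top"
      by (rule order_tendstoD(2)[OF asym_t2]) (use K1 K2 in simp)
    then show ?thesis by eventually_elim simp
  qed
  have ev: "eventually (\<lambda>n. expected_evals n (lam1 n) (D n) (lam2 n) \<le> ennreal (C * real n * ln (ln (real n)))) at_top"
    using asym_t4 assms(1) K1(2) c3(2) K2(2) c5(2) K6(2) assms(7) e1 e2 asym_t5 asym_t6 asym_t7[OF c5(1)] asym_t3[OF c3(1)]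
  proof eventually_elim
    case (elim n)
    have L: "2 \<le> n" "1 \<le> ln (real n)" "1 \<le> ln (ln (real n))" "1 \<le> ln (ln (ln (real n)))" "1 \<le> ln (ln (ln (ln (real n))))"
      using elim(1) by auto
    have Lpos: "0 < ln (ln (real n)) * ln (ln (ln (real n))) / ln (ln (ln (ln (real n))))"
      using L by (intro divide_pos_pos mult_pos_pos; linarith)
    have l1: "real (lam1 n) \<le> K1 * (ln (ln (real n)) * ln (ln (ln (real n))) / ln (ln (ln (ln (real n)))))"
      using elim(3) unfolding real_norm_def abs_of_pos[OF Lpos] by simp
    have h2: "0 \<le> real n * (ln (ln (real n)))\<^sup>2 / ln (real n)"
      using L by (intro divide_nonneg_nonneg mult_nonneg_nonneg; simp)
    have Dle: "real (D n) \<le> K2 * (real n * (ln (ln (real n)))\<^sup>2 / ln (real n))"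
      using elim(5) unfolding real_norm_def abs_of_nonneg[OF h2] by simp
    have h3: "0 \<le> ln (real n) / ln (ln (real n))"
      using L by (intro divide_nonneg_nonneg; linarith)
    have l2ge: "c5 * (ln (real n) / ln (ln (real n))) \<le> real (lam2 n)"
      using elim(6) unfolding real_norm_def abs_of_nonneg[OF h3] by simp
    have h4: "0 \<le> real n / real (D n) * ln (ln (real n))"
      using L by (intro divide_nonneg_nonneg mult_nonneg_nonneg; simp)
    have l2le: "real (lam2 n) \<le> K6 * (real n / real (D n) * ln (ln (real n)))"
      using elim(7) unfolding real_norm_def abs_of_nonneg[OF h4] by simp
    have "expected_evals n (lam1 n) (D n) (lam2 n) \<le> ennreal ((1 + 4 / cX * (K6 + 4 / c5) + 1 + exp 2 + exp 2 * c3 + 6 * B) * real n * ln (ln (real n)))"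
      by (rule pointwise[OF L K1(1) B_def elim(2) l1 c3(1) elim(4) K2(1) Dle c5(1) l2ge K6(1) l2le _ elim(9) elim(10) elim(11) elim(12) elim(13) elim(14)])
         (use elim(8) in simp)
    then show ?case by (simp add: C_def)
  qed
  then show ?thesis by blast
qed

end
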